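(* Let $r\ge1$ be an integer, $\nu$ fixed with $\Re(\nu)>-\frac1{r+1}$, $0<b$, $f\in C^\infty[0,b]$, $g(x)=x^{r+1}$, $\mathcal{H}_\nu[f]=\int_0^bf(x)J_\nu(\omega x^{r+1})\,dx$, $M_j(0,\nu,\omega)=\int_0^bx^jJ_\nu(\omega x^{r+1})\,dx$, $T_r[\phi](x,y)=\sum_{j=0}^r\frac{\phi^{(j)}(y)}{j!}(x-y)^j$, and $\widehat\sigma_0[f]=f$, $\widehat\sigma_k[f](x)=g(x)^{\nu+k}\frac{d}{dx}\left[\frac{\widehat\sigma_{k-1}[f](x)-T_r[\widehat\sigma_{k-1}[f]](x,0)}{g(x)^{\nu+k}g'(x)}\right]$ for $k\ge1$ (values at $0$ by continuous extension). Then, as $\omega\to\infty$, $$\mathcal{H}_\nu[f]\sim\sum_{k=0}^\infty\frac{1}{(-\omega)^k}\sum_{j=0}^r\frac{\widehat\sigma_k[f]^{(j)}(0)}{j!}M_j(0,\nu+k,\omega)-\sum_{k=1}^\infty\frac{1}{(-\omega)^k}\Big[\widehat\sigma_{k-1}[f](b)-T_r[\widehat\sigma_{k-1}[f]](b,0)\Big]\frac{J_{\nu+k}(\omega b^{r+1})}{(r+1)b^r}.$$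
   Context: $J_\nu$ is the Bessel function of the first kind of order $\nu$; $\sim$ denotes an asymptotic expansion as $\omega\to\infty$. *)

theory Defs
  imports "HOL-Analysis.Analysis" "HOL-Library.Landau_Symbols"
begin

definition Cinf_on_interval :: "real \<Rightarrow> real \<Rightarrow> (real \<Rightarrow> 'a::real_normed_vector) \<Rightarrow> bool" where
  "Cinf_on_interval a b f \<longleftrightarrow>
     (\<exists>Df :: nat \<Rightarrow> real \<Rightarrow> 'a.
        (\<forall>x\<in>{a..b}. Df 0 x = f x) \<and>
        (\<forall>n. continuous_on {a..b} (Df n)) \<and>
        (\<forall>n. \<forall>x\<in>{a..b}. (Df n has_vector_derivative Df (Suc n) x) (at x within {a..b})))"

definition bessel_J :: "complex \<Rightarrow> real \<Rightarrow> complex" where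
  "bessel_J \<nu> t = (\<Sum>m. (-1) ^ m * rGamma (of_nat m + \<nu> + 1) / fact m
                        * (complex_of_real (t / 2)) powr (2 * of_nat m + \<nu>))"

definition dI :: "real \<Rightarrow> (real \<Rightarrow> complex) \<Rightarrow> real \<Rightarrow> complex" where
  "dI b \<phi> x = vector_derivative \<phi> (at x within {0..b})"

definition taylorT :: "nat \<Rightarrow> real \<Rightarrow> (real \<Rightarrow> complex) \<Rightarrow> real \<Rightarrow> real \<Rightarrow> complex" where
  "taylorT r b \<phi> x y = (\<Sum>j\<le>r. (dI b ^^ j) \<phi> y / fact j * complex_of_real ((x - y) ^ j))"

definition gpow :: "nat \<Rightarrow> real \<Rightarrow> complex \<Rightarrow> complex" where
  "gpow r x s = complex_of_real (x ^ (r + 1)) powr s"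

primrec sigma_hat :: "nat \<Rightarrow> complex \<Rightarrow> real \<Rightarrow> (real \<Rightarrow> complex) \<Rightarrow> nat \<Rightarrow> real \<Rightarrow> complex" where
  "sigma_hat r \<nu> b \<phi> 0 = \<phi>"
| "sigma_hat r \<nu> b \<phi> (Suc k) =
     (let s = sigma_hat r \<nu> b \<phi> k;
          e = \<nu> + of_nat (Suc k);
          h = (\<lambda>x. (s x - taylorT r b s x 0) / (gpow r x e * complex_of_real (real (r + 1) * x ^ r)));
          u = (\<lambda>x. gpow r x e * dI b h x)
      in (\<lambda>x. if x = 0 then Lim (at_right 0) u else u x))"

definition hankelH :: "nat \<Rightarrow> real \<Rightarrow> complex \<Rightarrow> (real \<Rightarrow> complex) \<Rightarrow> real \<Rightarrow> complex" where
  "hankelH r b \<nu> f \<omega> = integral {0..b} (\<lambda>x. f x * bessel_J \<nu> (\<omega> * x ^ (r + 1)))"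

definition momentM :: "nat \<Rightarrow> real \<Rightarrow> nat \<Rightarrow> complex \<Rightarrow> real \<Rightarrow> complex" where
  "momentM r b j \<nu> \<omega> = integral {0..b} (\<lambda>x. complex_of_real (x ^ j) * bessel_J \<nu> (\<omega> * x ^ (r + 1)))"

end

theory Submission
  imports Defs
begin


definition bc :: "complex \<Rightarrow> nat \<Rightarrow> complex" where
  "bc \<mu> m = (-1) ^ m * rGamma (of_nat m + \<mu> + 1) / fact m"

definition BS :: "complex \<Rightarrow> complex \<Rightarrow> complex" where
  "BS \<mu> z = (\<Sum>m. bc \<mu> m * z ^ m)"

lemma bc_shift: "bc \<mu> m = (of_nat m + \<mu> + 1) * bc (\<mu> + 1) m"
proof -
  have "rGamma (of_nat m + \<mu> + 1) = (of_nat m + \<mu> + 1) * rGamma (of_nat m + (\<mu> + 1) + 1)"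
    using rGamma_plus1[of "of_nat m + \<mu> + 1"] by (simp add: add.assoc)
  then show ?thesis by (simp add: bc_def)
qed

lemma nz1: "(1 + of_nat m :: complex) \<noteq> 0"
  by (metis of_nat_Suc of_nat_eq_0_iff add.commute nat.distinct(1))

lemma cancel_aux: "c \<noteq> 0 \<Longrightarrow> c * (a / (c * d)) = (a / d :: complex)"
  by (cases "d = 0") (simp_all add: field_simps)

lemma bc_diffs: "diffs (bc \<mu>) m = - bc (\<mu> + 1) m"
proof -
  have f: "(fact m :: complex) \<noteq> 0" by simp
  have "diffs (bc \<mu>) m = (1 + of_nat m) * ((-1) ^ Suc m * rGamma (of_nat m + \<mu> + 2) / ((1 + of_nat m) * fact m))"
    by (simp add: diffs_def bc_def fact_Suc add_ac)
  also have "\<dots> = - ((-1) ^ m * rGamma (of_nat m + \<mu> + 2) / fact m)"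
    using cancel_aux[OF nz1[of m]] by simp
  also have "\<dots> = - bc (\<mu> + 1) m" by (simp add: bc_def add_ac)
  finally show ?thesis .
qed

lemma bc_Suc: "bc \<mu> (Suc m) = - bc (\<mu>+1) m / of_nat (Suc m)"
  using bc_diffs[of \<mu> m] nz1[of m] by (simp add: diffs_def field_simps)

lemma bc_summable: "summable (\<lambda>m. bc \<mu> m * z ^ m)"
proof -
  obtain N :: nat where N: "real N \<ge> 2 * cmod \<mu> + 2 * cmod z + 2"
    using real_arch_simple by blast
  show ?thesis
  proof (rule summable_ratio_test[where c="1/2" and N=N])
    fix n assume n: "n \<ge> N"
    have nn: "real n \<ge> 2 * cmod \<mu> + 2 * cmod z + 2" using N n by linarith
    have "cmod (of_nat n + \<mu> + 1) \<ge> real n + 1 - cmod \<mu>"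
    proof -
      have "cmod (of_nat (Suc n)) \<le> cmod (of_nat n + \<mu> + 1) + cmod \<mu>"
        using norm_triangle_ineq4[of "of_nat n + \<mu> + 1" \<mu>] by (simp add: add.commute)
      moreover have "cmod (of_nat (Suc n) :: complex) = real n + 1" by (simp only: norm_of_nat)
      ultimately show ?thesis by simp
    qed
    then have A: "cmod (of_nat n + \<mu> + 1) \<ge> 2 * cmod z + 1" using nn norm_ge_zero[of \<mu>] by linarith
    have "bc \<mu> (Suc n) = - bc (\<mu>+1) n / of_nat (Suc n)" by (rule bc_Suc)
    also have "bc (\<mu>+1) n = bc \<mu> n / (of_nat n + \<mu> + 1)"
    proof -
      have "of_nat n + \<mu> + 1 \<noteq> 0" using A by (metis norm_zero norm_ge_zero add_nonneg_pos zero_less_one mult_nonneg_nonneg not_le zero_le_numeral order_le_less_trans)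
      then show ?thesis using bc_shift[of \<mu> n] by (simp add: nonzero_eq_divide_eq mult.commute)
    qed
    finally have eq: "bc \<mu> (Suc n) = - bc \<mu> n / ((of_nat n + \<mu> + 1) * of_nat (Suc n))"
      by simp
    have "cmod (bc \<mu> (Suc n) * z ^ Suc n) = cmod (bc \<mu> n * z ^ n) * cmod z / (cmod (of_nat n + \<mu> + 1) * (real n + 1))"
    proof -
      have d: "cmod (of_nat (Suc n) :: complex) = real n + 1" by (simp only: norm_of_nat)
      have "cmod (bc \<mu> (Suc n) * z ^ Suc n) = cmod (bc \<mu> n) * (cmod z ^ n * cmod z) / (cmod (of_nat n + \<mu> + 1) * cmod (of_nat (Suc n) :: complex))"
        unfolding eq norm_mult norm_divide norm_minus_cancel norm_power by simp
      then show ?thesis unfolding d by (simp add: norm_mult norm_power)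
    qed
    also have "\<dots> \<le> cmod (bc \<mu> n * z ^ n) * (1/2)"
    proof -
      have "cmod z / (cmod (of_nat n + \<mu> + 1) * (real n + 1)) \<le> 1/2"
      proof -
        have p: "cmod (of_nat n + \<mu> + 1) * (real n + 1) \<ge> cmod (of_nat n + \<mu> + 1)"
          using A by (simp add: mult_le_cancel_left1 norm_ge_zero)
        have q: "cmod (of_nat n + \<mu> + 1) * (real n + 1) > 0" using A norm_ge_zero[of z]
          by (intro mult_pos_pos) linarith+
        have "cmod z \<le> 1/2 * (cmod (of_nat n + \<mu> + 1) * (real n + 1))" using p A by linarith
        then show ?thesis using q by (simp add: divide_le_eq)
      qed
      then show ?thesis
        by (metis (no_types, lifting) mult_left_mono norm_ge_zero times_divide_eq_right)
    qed
    finally show "cmod (bc \<mu> (Suc n) * z ^ Suc n) \<le> 1/2 * cmod (bc \<mu> n * z ^ n)" by simp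
  qed simp
qed

lemma BS_deriv: "(BS \<mu> has_field_derivative - BS (\<mu>+1) z) (at z)"
proof -
  have "((\<lambda>x. \<Sum>n. bc \<mu> n * x^n) has_field_derivative (\<Sum>n. diffs (bc \<mu>) n * z^n)) (at z)"
    by (rule termdiffs_strong_converges_everywhere[OF bc_summable])
  moreover have "(\<Sum>n. diffs (bc \<mu>) n * z^n) = - BS (\<mu>+1) z"
    unfolding bc_diffs BS_def using suminf_minus[OF bc_summable[of "\<mu>+1" z]] by simp
  ultimately show ?thesis unfolding BS_def[abs_def] by simp
qed

lemma BS_rel: "BS \<mu> z = (\<mu>+1) * BS (\<mu>+1) z - z * BS (\<mu>+2) z"
proof -
  have s1: "(\<lambda>m. bc \<mu> m * z ^ m) sums BS \<mu> z" using bc_summable summable_sums BS_def by metis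
  have s2: "(\<lambda>m. (\<mu>+1) * (bc (\<mu>+1) m * z ^ m)) sums ((\<mu>+1) * BS (\<mu>+1) z)"
    using bc_summable summable_sums BS_def sums_mult by metis
  have s3: "(\<lambda>n. - z * (bc (\<mu>+2) n * z ^ n)) sums (- z * BS (\<mu>+2) z)"
    using bc_summable summable_sums BS_def sums_mult by metis
  define g where "g m = of_nat m * bc (\<mu>+1) m * z ^ m" for m
  have "(\<lambda>n. g (Suc n)) = (\<lambda>n. - z * (bc (\<mu>+2) n * z ^ n))"
  proof
    fix n
    have "bc (\<mu>+1) (Suc n) = - bc (\<mu>+1+1) n / of_nat (Suc n)" by (rule bc_Suc)
    then show "g (Suc n) = - z * (bc (\<mu>+2) n * z ^ n)"
      unfolding g_def using nz1[of n] by (simp add: field_simps add_ac)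
  qed
  with s3 have "g sums (- z * BS (\<mu>+2) z)" using sums_Suc_iff[of g] by (simp add: g_def)
  from sums_add[OF s2 this] have "(\<lambda>m. (\<mu>+1) * (bc (\<mu>+1) m * z ^ m) + g m) sums
      ((\<mu>+1) * BS (\<mu>+1) z + - z * BS (\<mu>+2) z)" .
  moreover have "(\<lambda>m. (\<mu>+1) * (bc (\<mu>+1) m * z ^ m) + g m) = (\<lambda>m. bc \<mu> m * z ^ m)"
    by (rule ext) (simp add: g_def bc_shift[of \<mu>] field_simps)
  ultimately have "(\<lambda>m. bc \<mu> m * z ^ m) sums ((\<mu>+1) * BS (\<mu>+1) z - z * BS (\<mu>+2) z)" by simp
  with s1 show ?thesis using sums_unique2 by blast
qed


definition Jc :: "complex \<Rightarrow> complex \<Rightarrow> complex" where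
  "Jc \<mu> z = (z/2) powr \<mu> * BS \<mu> ((z/2)^2)"

lemma bessel_eq_Jc:
  assumes t: "t > 0"
  shows "bessel_J \<mu> t = Jc \<mu> (of_real t)"
proof -
  define w where "w = complex_of_real (t/2)"
  have w0: "w \<noteq> 0" using t by (simp add: w_def)
  have tm: "(-1) ^ m * rGamma (of_nat m + \<mu> + 1) / fact m * w powr (2 * of_nat m + \<mu>)
      = w powr \<mu> * (bc \<mu> m * (w^2)^m)" for m
  proof -
    have "w powr (2 * of_nat m + \<mu>) = w powr (of_nat (2*m)) * w powr \<mu>"
      by (simp add: powr_add)
    also have "\<dots> = (w^2)^m * w powr \<mu>" using w0 powr_nat'[of w "2*m"] by (simp add: power_mult)
    finally show ?thesis by (simp add: bc_def)
  qed
  have "bessel_J \<mu> t = (\<Sum>m. w powr \<mu> * (bc \<mu> m * (w^2)^m))"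
    unfolding bessel_J_def w_def[symmetric] tm by simp
  also have "\<dots> = w powr \<mu> * BS \<mu> (w^2)"
    unfolding BS_def by (rule suminf_mult[OF bc_summable])
  finally show ?thesis by (simp add: Jc_def w_def)
qed

lemma bessel_J_0: "bessel_J \<mu> 0 = 0"
  by (simp add: bessel_J_def)

lemma Jc_deriv:
  assumes z: "Re z > 0"
  shows "(Jc \<mu> has_field_derivative (\<mu> / z * Jc \<mu> z - Jc (\<mu>+1) z)) (at z)"
proof -
  have z0: "z \<noteq> 0" using z by auto
  have nn: "z/2 \<notin> \<real>\<^sub>\<le>\<^sub>0" using z by (auto simp: complex_nonpos_Reals_iff)
  have d1: "((\<lambda>z. (z/2) powr \<mu>) has_field_derivative (\<mu> * (z/2) powr (\<mu> - 1) * (1/2))) (at z)"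
  proof -
    have g: "((\<lambda>z. z/2) has_field_derivative 1/2) (at z within UNIV)"
      by (auto intro!: derivative_eq_intros)
    show ?thesis
      using DERIV_chain2[where f="\<lambda>w. w powr \<mu>" and g="\<lambda>z. z/2" and x=z and s=UNIV and Db="1/2",
        OF has_field_derivative_powr[OF nn, of \<mu>] g] by simp
  qed
  have d2: "((\<lambda>z. BS \<mu> ((z/2)^2)) has_field_derivative (- BS (\<mu>+1) ((z/2)^2) * (z/2))) (at z)"
  proof -
    have g: "((\<lambda>z. (z/2)^2) has_field_derivative z/2) (at z within UNIV)"
      by (auto intro!: derivative_eq_intros simp: power2_eq_square)
    show ?thesis
      using DERIV_chain2[where f="BS \<mu>" and g="\<lambda>z. (z/2)^2" and x=z and s=UNIV and Db="z/2",
        OF BS_deriv g] by simp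
  qed
  have dd: "(Jc \<mu> has_field_derivative ((z/2) powr \<mu> * (- BS (\<mu>+1) ((z/2)^2) * (z/2))
        + \<mu> * (z/2) powr (\<mu> - 1) * (1/2) * BS \<mu> ((z/2)^2))) (at z)"
    unfolding Jc_def[abs_def] using DERIV_mult[OF d1 d2] by (simp add: ac_simps)
  have p1: "(z/2) powr (\<mu> - 1) = (z/2) powr \<mu> / (z/2)"
    using z0 by (simp add: powr_diff)
  have p2: "(z/2) powr (\<mu> + 1) = (z/2) powr \<mu> * (z/2)"
    using z0 by (simp add: powr_add)
  have "(z/2) powr \<mu> * (- BS (\<mu>+1) ((z/2)^2) * (z/2))
        + \<mu> * (z/2) powr (\<mu> - 1) * (1/2) * BS \<mu> ((z/2)^2) = \<mu> / z * Jc \<mu> z - Jc (\<mu>+1) z"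
    unfolding Jc_def p1 p2 using z0 by (simp add: field_simps)
  with dd show ?thesis by simp
qed

lemma Jc_rec:
  assumes z0: "z \<noteq> 0"
  shows "Jc \<mu> z + Jc (\<mu>+2) z = 2 * (\<mu>+1) / z * Jc (\<mu>+1) z"
proof -
  have p1: "(z/2) powr (\<mu> + 1) = (z/2) powr \<mu> * (z/2)"
    using z0 by (simp add: powr_add)
  have p2: "(z/2) powr (\<mu> + 2) = (z/2) powr \<mu> * (z/2)^2"
  proof -
    have "(z/2) powr (\<mu> + 2) = (z/2) powr \<mu> * (z/2) powr (of_nat 2)"
      by (simp add: powr_add)
    then show ?thesis using z0 by (simp add: powr_nat')
  qed
  show ?thesis
    unfolding Jc_def p1 p2 BS_rel[of \<mu> "(z/2)^2"] using z0
    by (simp add: field_simps power2_eq_square)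
qed

lemma Jc_deriv1:
  assumes z: "Re z > 0"
  shows "(Jc (\<mu>+1) has_field_derivative (Jc \<mu> z - (\<mu>+1) / z * Jc (\<mu>+1) z)) (at z)"
proof -
  have z0: "z \<noteq> 0" using z by auto
  have "(Jc (\<mu>+1) has_field_derivative ((\<mu>+1) / z * Jc (\<mu>+1) z - Jc (\<mu>+1+1) z)) (at z)"
    by (rule Jc_deriv[OF z])
  moreover have "Jc (\<mu>+1+1) z = 2 * (\<mu>+1) / z * Jc (\<mu>+1) z - Jc \<mu> z"
    using Jc_rec[OF z0, of \<mu>] by (simp add: add.assoc eq_diff_eq add.commute)
  moreover have "(\<mu>+1) / z * Jc (\<mu>+1) z - (2 * (\<mu>+1) / z * Jc (\<mu>+1) z - Jc \<mu> z)
     = Jc \<mu> z - (\<mu>+1) / z * Jc (\<mu>+1) z" by (simp add: algebra_simps)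
  ultimately show ?thesis by (metis DERIV_cong)
qed

lemma bessel_deriv:
  assumes t: "t > 0"
  shows "(bessel_J \<mu> has_vector_derivative (\<mu> / of_real t * bessel_J \<mu> t - bessel_J (\<mu>+1) t)) (at t)"
proof -
  have "((\<lambda>x. Jc \<mu> (of_real x)) has_vector_derivative (\<mu> / of_real t * Jc \<mu> (of_real t) - Jc (\<mu>+1) (of_real t))) (at t)"
    using has_vector_derivative_real_field[OF Jc_deriv, of t \<mu> UNIV] t by simp
  then show ?thesis
    using has_vector_derivative_transform_within_open[of "\<lambda>x. Jc \<mu> (of_real x)" _ t "{0<..}" "bessel_J \<mu>"]
      t bessel_eq_Jc by auto
qed

lemma bessel_deriv1:
  assumes t: "t > 0"
  shows "(bessel_J (\<mu>+1) has_vector_derivative (bessel_J \<mu> t - (\<mu>+1) / of_real t * bessel_J (\<mu>+1) t)) (at t)"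
proof -
  have "((\<lambda>x. Jc (\<mu>+1) (of_real x)) has_vector_derivative (Jc \<mu> (of_real t) - (\<mu>+1) / of_real t * Jc (\<mu>+1) (of_real t))) (at t)"
    using has_vector_derivative_real_field[OF Jc_deriv1, of t \<mu> UNIV] t by simp
  then show ?thesis
    using has_vector_derivative_transform_within_open[of "\<lambda>x. Jc (\<mu>+1) (of_real x)" _ t "{0<..}" "bessel_J (\<mu>+1)"]
      t bessel_eq_Jc by auto
qed

lemma BS_bounded: "\<exists>K. \<forall>z. cmod z \<le> R \<longrightarrow> cmod (BS \<mu> z) \<le> K"
proof -
  have "continuous_on (cball 0 R) (BS \<mu>)"
    using BS_deriv by (meson DERIV_isCont continuous_at_imp_continuous_on)
  then have "compact (BS \<mu> ` cball 0 R)" by (rule compact_continuous_image) simp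
  then obtain K where "\<forall>y\<in>BS \<mu> ` cball 0 R. cmod y \<le> K" using compact_imp_bounded bounded_iff by metis
  then show ?thesis using mem_cball_0 by blast
qed

lemma bessel_bound0:
  assumes "T > 0"
  shows "\<exists>K\<ge>0. \<forall>t. 0 < t \<and> t \<le> T \<longrightarrow> cmod (bessel_J \<mu> t) \<le> K * (t/2) powr Re \<mu>"
proof -
  obtain K where K: "\<And>z. cmod z \<le> (T/2)^2 \<Longrightarrow> cmod (BS \<mu> z) \<le> K" using BS_bounded by metis
  have K0: "K \<ge> 0" using K[of 0] by (smt (verit) norm_ge_zero zero_le_power2 norm_zero)
  show ?thesis
  proof (intro exI[of _ K] conjI allI impI K0)
    fix t assume t: "0 < t \<and> t \<le> T"
    have "bessel_J \<mu> t = (of_real (t/2)) powr \<mu> * BS \<mu> ((of_real (t/2))^2)"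
      using bessel_eq_Jc[of t \<mu>] t by (simp add: Jc_def)
    then have "cmod (bessel_J \<mu> t) = (t/2) powr Re \<mu> * cmod (BS \<mu> ((of_real (t/2))^2))"
      using t by (simp add: norm_mult norm_powr_real_powr)
    also have "\<dots> \<le> (t/2) powr Re \<mu> * K"
      using t by (intro mult_left_mono K) (auto simp: norm_power intro!: power_mono)
    finally show "cmod (bessel_J \<mu> t) \<le> K * (t/2) powr Re \<mu>" by (simp add: mult.commute)
  qed
qed


lemma energy_bound:
  fixes \<mu> :: complex
  shows "\<exists>C. \<forall>t\<ge>1. cmod (bessel_J \<mu> t) \<le> C"
proof -
  define u where "u = bessel_J \<mu>"
  define v where "v = bessel_J (\<mu>+1)"
  define sq where "sq t = complex_of_real (sqrt t)" for t
  define w where "w t = sq t * u t" for t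
  define isq where "isq t = complex_of_real (inverse (sqrt t))" for t
  define W where "W t = - sq t * v t + (\<mu> + 1/2) * u t * isq t" for t
  define c where "c = \<mu>^2 - 1/4"
  have du: "(u has_vector_derivative (\<mu> / of_real t * u t - v t)) (at t)" if "t > 0" for t
    unfolding u_def v_def by (rule bessel_deriv[OF that])
  have dv: "(v has_vector_derivative (u t - (\<mu>+1) / of_real t * v t)) (at t)" if "t > 0" for t
    unfolding u_def v_def by (rule bessel_deriv1[OF that])
  have dsq: "(sq has_vector_derivative (1 / (2 * sq t))) (at t)" if "t > 0" for t
  proof -
    have "(sqrt has_real_derivative inverse (sqrt t) / 2) (at t)" by (rule DERIV_real_sqrt[OF that])
    then have "((\<lambda>x. complex_of_real (sqrt x)) has_vector_derivative complex_of_real (inverse (sqrt t) / 2)) (at t)"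
      by (rule has_vector_derivative_of_real)
    moreover have "complex_of_real (inverse (sqrt t) / 2) = 1 / (2 * complex_of_real (sqrt t))"
      by (simp add: inverse_eq_divide mult.commute)
    ultimately show ?thesis unfolding sq_def[abs_def] by (simp only:)
  qed
  have sq2: "sq t * sq t = of_real t" if "t > 0" for t
    unfolding sq_def of_real_mult[symmetric] using that by simp
  have sq0: "sq t \<noteq> 0" if "t > 0" for t using that by (simp add: sq_def)
  have isq: "isq t = 1 / sq t" for t by (simp add: sq_def isq_def inverse_eq_divide)
  have disq: "(isq has_vector_derivative (- isq t / (2 * of_real t))) (at t)" if t: "t > 0" for t
  proof -
    have "sqrt t \<noteq> 0" using t by simp
    from DERIV_inverse_fun[OF DERIV_real_sqrt[OF t] this]
    have "((\<lambda>x. inverse (sqrt x)) has_real_derivative (- (inverse (sqrt t) / 2 * inverse (sqrt t ^ Suc (Suc 0))))) (at t)" .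
    moreover have "- (inverse (sqrt t) / 2 * inverse (sqrt t ^ Suc (Suc 0))) = - inverse (sqrt t) / (2 * t)"
    proof -
      have "sqrt t ^ Suc (Suc 0) = t" using t by (simp add: numeral_2_eq_2[symmetric])
      then show ?thesis by (simp, metis divide_inverse)
    qed
    ultimately have "((\<lambda>x. inverse (sqrt x)) has_real_derivative (- inverse (sqrt t) / (2 * t))) (at t)" by metis
    then have "((\<lambda>x. complex_of_real (inverse (sqrt x))) has_vector_derivative
        complex_of_real (- inverse (sqrt t) / (2 * t))) (at t)"
      by (rule has_vector_derivative_of_real)
    moreover have "complex_of_real (- inverse (sqrt t) / (2 * t)) = - isq t / (2 * of_real t)"
      by (simp add: isq_def)
    ultimately show ?thesis unfolding isq_def[abs_def] by (simp only:)
  qed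
  have dw: "(w has_vector_derivative W t) (at t)" if t: "t > 0" for t
  proof -
    have "(w has_vector_derivative (sq t * (\<mu> / of_real t * u t - v t) + 1 / (2 * sq t) * u t)) (at t)"
      unfolding w_def[abs_def] by (rule has_vector_derivative_mult[OF dsq[OF t] du[OF t]])
    moreover have "sq t * (\<mu> / of_real t * u t - v t) + 1 / (2 * sq t) * u t = W t"
      unfolding W_def isq sq2[OF t, symmetric] using sq0[OF t] by (simp add: field_simps)
    ultimately show ?thesis by simp
  qed
  have dW: "(W has_vector_derivative (- w t + c * w t / (of_real t)^2)) (at t)" if t: "t > 0" for t
  proof -
    have "(W has_vector_derivative
        (- (sq t * (u t - (\<mu>+1) / of_real t * v t) + 1 / (2 * sq t) * v t)
         + ((\<mu> + 1/2) * u t * (- isq t / (2 * of_real t)) + (\<mu> + 1/2) * (\<mu> / of_real t * u t - v t) * isq t))) (at t)"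
      unfolding W_def[abs_def]
      by (rule derivative_eq_intros dsq[OF t] du[OF t] dv[OF t] disq[OF t] refl | simp)+
    moreover have "- (sq t * (u t - (\<mu>+1) / of_real t * v t) + 1 / (2 * sq t) * v t)
         + ((\<mu> + 1/2) * u t * (- isq t / (2 * of_real t)) + (\<mu> + 1/2) * (\<mu> / of_real t * u t - v t) * isq t)
       = - w t + c * w t / (of_real t)^2"
      unfolding w_def c_def isq sq2[OF t, symmetric] using sq0[OF t]
      by (simp add: field_simps power2_eq_square)
    ultimately show ?thesis by simp
  qed
  define E where "E t = Re (w t * cnj (w t)) + Re (W t * cnj (W t))" for t
  have Enorm: "E t = (cmod (w t))^2 + (cmod (W t))^2" for t
    unfolding E_def complex_norm_square[symmetric] Re_complex_of_real ..
  define X where "X t = w t * cnj (W t) + W t * cnj (w t) + (W t * cnj (- w t + c * w t / (of_real t)^2)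
       + (- w t + c * w t / (of_real t)^2) * cnj (W t))" for t
  have dE: "(E has_real_derivative Re (X t)) (at t)" if t: "t > 0" for t
  proof -
    have "((\<lambda>t. w t * cnj (w t) + W t * cnj (W t)) has_vector_derivative X t) (at t)"
      unfolding X_def
      by (rule derivative_eq_intros dw[OF t] dW[OF t] refl | simp)+
    from bounded_linear.has_vector_derivative[OF bounded_linear_Re this]
    show ?thesis unfolding has_real_derivative_iff_has_vector_derivative E_def by simp
  qed
  have Xeq: "X t = (W t * cnj (c * w t) + c * w t * cnj (W t)) / (of_real t)^2" if t: "t > 0" for t
    unfolding X_def using t by (simp add: field_simps)
  have XE: "Re (X t) \<le> cmod c * E t / t^2" if t: "t > 0" for t
  proof -
    have "Re (X t) \<le> cmod (X t)" by (rule complex_Re_le_cmod)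
    also have "\<dots> \<le> (cmod (W t) * (cmod c * cmod (w t)) + cmod c * cmod (w t) * cmod (W t)) / t^2"
      unfolding Xeq[OF t] using t
      by (simp add: norm_divide norm_mult norm_power divide_right_mono norm_triangle_ineq[THEN order_trans])
    also have "\<dots> \<le> cmod c * E t / t^2"
    proof -
      have "2 * (cmod (W t) * cmod (w t)) \<le> (cmod (w t))^2 + (cmod (W t))^2"
        using sum_squares_bound[of "cmod (W t)" "cmod (w t)"] by (simp add: algebra_simps)
      then have "cmod (W t) * (cmod c * cmod (w t)) + cmod c * cmod (w t) * cmod (W t) \<le> cmod c * E t"
        unfolding Enorm by (smt (verit, best) mult.commute mult.left_commute mult_left_mono norm_ge_zero distrib_left)
      then show ?thesis using t by (simp add: divide_right_mono)
    qed
    finally show ?thesis .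
  qed
  define \<phi> where "\<phi> t = E t * exp (cmod c / t)" for t
  have dphi: "(\<phi> has_real_derivative (Re (X t) * exp (cmod c / t) + E t * (exp (cmod c / t) * (- cmod c / t^2)))) (at t)"
    if t: "t > 0" for t
    unfolding \<phi>_def[abs_def] using t
    by (auto intro!: derivative_eq_intros dE simp: power2_eq_square)
  have dphi_nonpos: "Re (X t) * exp (cmod c / t) + E t * (exp (cmod c / t) * (- cmod c / t^2)) \<le> 0"
    if t: "t > 0" for t
  proof -
    have "Re (X t) * exp (cmod c / t) \<le> cmod c * E t / t^2 * exp (cmod c / t)"
      by (rule mult_right_mono[OF XE[OF t]]) simp
    moreover have "E t * (exp (cmod c / t) * (- cmod c / t^2)) = - (cmod c * E t / t^2 * exp (cmod c / t))"
      by (simp add: divide_inverse mult_ac)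
    ultimately show ?thesis by linarith
  qed
  have bound: "cmod (u T) \<le> sqrt (\<phi> 1)" if T: "T \<ge> 1" for T
  proof -
    have "\<phi> T \<le> \<phi> 1"
    proof (rule DERIV_nonpos_imp_nonincreasing[OF T])
      fix x :: real assume "1 \<le> x" "x \<le> T"
      then have x: "x > 0" by simp
      show "\<exists>y. (\<phi> has_real_derivative y) (at x) \<and> y \<le> 0"
        using dphi[OF x] dphi_nonpos[OF x] by blast
    qed
    moreover have "E T \<le> \<phi> T"
    proof -
      have "E T \<ge> 0" unfolding Enorm by simp
      moreover have "exp (cmod c / T) \<ge> 1" using T by simp
      ultimately show ?thesis unfolding \<phi>_def by (simp add: mult_le_cancel_left1)
    qed
    moreover have "(cmod (u T))^2 \<le> E T"
    proof -
      have "cmod (w T) = sqrt T * cmod (u T)" using T by (simp add: w_def sq_def norm_mult)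
      moreover have "sqrt T \<ge> 1" using T by simp
      ultimately have "cmod (u T) \<le> cmod (w T)" by (simp add: mult_le_cancel_right1)
      then have "(cmod (u T))^2 \<le> (cmod (w T))^2" by (rule power_mono) simp
      then show ?thesis unfolding Enorm using zero_le_power2[of "cmod (W T)"] by linarith
    qed
    ultimately have "(cmod (u T))^2 \<le> \<phi> 1" by simp
    then show ?thesis by (simp add: real_le_rsqrt)
  qed
  then show ?thesis unfolding u_def by blast
qed

lemma bessel_bounded:
  assumes "Re \<mu> \<ge> 0"
  shows "\<exists>C\<ge>0. \<forall>t\<ge>0. cmod (bessel_J \<mu> t) \<le> C"
proof -
  obtain C1 where C1: "\<And>t. t \<ge> 1 \<Longrightarrow> cmod (bessel_J \<mu> t) \<le> C1" using energy_bound by blast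
  obtain K where K: "K \<ge> 0" "\<And>t. 0 < t \<and> t \<le> 1 \<Longrightarrow> cmod (bessel_J \<mu> t) \<le> K * (t/2) powr Re \<mu>"
    using bessel_bound0[of 1 \<mu>] by auto
  show ?thesis
  proof (intro exI[of _ "max (max C1 K) 0"] conjI allI impI)
    fix t :: real assume t: "t \<ge> 0"
    consider "t = 0" | "0 < t \<and> t \<le> 1" | "t \<ge> 1" using t by linarith
    then show "cmod (bessel_J \<mu> t) \<le> max (max C1 K) 0"
    proof cases
      case 1 then show ?thesis by (simp add: bessel_J_0)
    next
      case 2
      have "(t/2) powr Re \<mu> \<le> 1" using 2 assms by (intro powr_le1) auto
      then have "K * (t/2) powr Re \<mu> \<le> K" using K(1) by (simp add: mult_left_le)
      then show ?thesis using K(2)[OF 2] by linarith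
    next
      case 3 then show ?thesis using C1 by fastforce
    qed
  qed simp
qed


definition CW :: "real \<Rightarrow> (real \<Rightarrow> complex) \<Rightarrow> (nat \<Rightarrow> real \<Rightarrow> complex) \<Rightarrow> bool" where
  "CW b \<phi> D \<longleftrightarrow> (\<forall>x\<in>{0..b}. D 0 x = \<phi> x) \<and> (\<forall>n. continuous_on {0..b} (D n)) \<and>
     (\<forall>n. \<forall>x\<in>{0..b}. (D n has_vector_derivative D (Suc n) x) (at x within {0..b}))"

lemma CW_D0: "CW b \<phi> D \<Longrightarrow> x \<in> {0..b} \<Longrightarrow> D 0 x = \<phi> x"
  by (simp add: CW_def)

lemma CW_cont: "CW b \<phi> D \<Longrightarrow> continuous_on {0..b} (D n)"
  by (simp add: CW_def)

lemma CW_der: "CW b \<phi> D \<Longrightarrow> x \<in> {0..b} \<Longrightarrow> (D n has_vector_derivative D (Suc n) x) (at x within {0..b})"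
  by (simp add: CW_def)

lemma CW_intro:
  assumes "\<And>x. x \<in> {0..b} \<Longrightarrow> D 0 x = \<phi> x"
    and "\<And>n x. x \<in> {0..b} \<Longrightarrow> (D n has_vector_derivative D (Suc n) x) (at x within {0..b})"
  shows "CW b \<phi> D"
  unfolding CW_def
proof (intro conjI ballI allI)
  fix n show "continuous_on {0..b} (D n)"
    using assms(2) has_vector_derivative_continuous continuous_on_eq_continuous_within by blast
qed (use assms in auto)

lemma CW_cong: "CW b \<phi> D \<Longrightarrow> (\<And>x. x \<in> {0..b} \<Longrightarrow> \<phi> x = \<psi> x) \<Longrightarrow> CW b \<psi> D"
  by (simp add: CW_def)

lemma CW_dI:
  assumes b: "b > 0" and cw: "CW b \<phi> D" and x: "x \<in> {0..b}"
  shows "(dI b ^^ n) \<phi> x = D n x"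
  using x
proof (induction n arbitrary: x)
  case 0 then show ?case using CW_D0[OF cw] by simp
next
  case (Suc n)
  have "((dI b ^^ n) \<phi> has_vector_derivative D (Suc n) x) (at x within {0..b})"
    using has_vector_derivative_transform_within[OF CW_der[OF cw Suc.prems, of n] zero_less_one Suc.prems]
      Suc.IH by metis
  then have "vector_derivative ((dI b ^^ n) \<phi>) (at x within {0..b}) = D (Suc n) x"
    using vector_derivative_within_closed_interval[OF b Suc.prems] by blast
  then show ?case unfolding funpow.simps(2) o_apply dI_def[of b "(dI b ^^ n) \<phi>" x] .
qed

lemma CW_add: assumes "CW b \<phi> D" "CW b \<psi> E" shows "CW b (\<lambda>x. \<phi> x + \<psi> x) (\<lambda>n x. D n x + E n x)"
  by (rule CW_intro) (auto simp: CW_D0[OF assms(1)] CW_D0[OF assms(2)]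
      intro!: has_vector_derivative_add CW_der[OF assms(1)] CW_der[OF assms(2)])

lemma CW_diff: assumes "CW b \<phi> D" "CW b \<psi> E" shows "CW b (\<lambda>x. \<phi> x - \<psi> x) (\<lambda>n x. D n x - E n x)"
  by (rule CW_intro) (auto simp: CW_D0[OF assms(1)] CW_D0[OF assms(2)]
      intro!: has_vector_derivative_diff CW_der[OF assms(1)] CW_der[OF assms(2)])

lemma CW_cmult: assumes "CW b \<phi> D" shows "CW b (\<lambda>x. c * \<phi> x) (\<lambda>n x. c * D n x)"
  by (rule CW_intro) (auto simp: CW_D0[OF assms(1)]
      intro!: has_vector_derivative_mult_right CW_der[OF assms(1)])

lemma CW_shift: assumes "CW b \<phi> D" shows "CW b (D 1) (\<lambda>n. D (Suc n))"
  by (rule CW_intro) (auto intro!: CW_der[OF assms(1)])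

lemma CW_xmult:
  assumes cw: "CW b \<phi> D"
  shows "CW b (\<lambda>x. of_real x * \<phi> x) (\<lambda>n x. of_real x * D n x + of_nat n * D (n - 1) x)"
proof (rule CW_intro)
  fix x assume x: "x \<in> {0..b}"
  then show "of_real x * D 0 x + of_nat 0 * D (0 - 1) x = of_real x * \<phi> x" using CW_D0[OF cw] by simp
next
  fix n x assume x: "x \<in> {0..b}"
  have d1: "((\<lambda>x. of_real x * D n x) has_vector_derivative (of_real x * D (Suc n) x + 1 * D n x)) (at x within {0..b})"
    by (rule has_vector_derivative_mult[OF _ CW_der[OF cw x]])
       (auto intro!: derivative_eq_intros has_vector_derivative_of_real)
  show "((\<lambda>x. of_real x * D n x + of_nat n * D (n - 1) x) has_vector_derivative
      of_real x * D (Suc n) x + of_nat (Suc n) * D (Suc n - 1) x) (at x within {0..b})"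
  proof (cases n)
    case 0
    then show ?thesis using d1 by (auto intro!: derivative_eq_intros)
  next
    case (Suc m)
    have d2: "((\<lambda>x. of_nat n * D (n - 1) x) has_vector_derivative of_nat n * D n x) (at x within {0..b})"
      using CW_der[OF cw x, of m] Suc by (auto intro!: derivative_eq_intros)
    show ?thesis using has_vector_derivative_add[OF d1 d2] by (simp add: algebra_simps)
  qed
qed

lemma CW_const: "CW b (\<lambda>x. c) (\<lambda>n x. if n = 0 then c else 0)"
  by (rule CW_intro) (auto intro!: derivative_eq_intros)

lemma CW_of_real:
  assumes "Cinf_on_interval 0 b f"
  shows "\<exists>D. CW b (\<lambda>x. complex_of_real (f x)) D"
proof -
  obtain Df where Df: "\<forall>x\<in>{0..b}. Df 0 x = f x"
    "\<forall>n. \<forall>x\<in>{0..b}. (Df n has_vector_derivative Df (Suc n) x) (at x within {0..b})"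
    using assms unfolding Cinf_on_interval_def by blast
  have "CW b (\<lambda>x. complex_of_real (f x)) (\<lambda>n x. complex_of_real (Df n x))"
  proof (rule CW_intro)
    fix n x assume x: "x \<in> {0..b}"
    have "(Df n has_real_derivative Df (Suc n) x) (at x within {0..b})"
      using Df(2) x by (simp add: has_real_derivative_iff_has_vector_derivative)
    then show "((\<lambda>x. complex_of_real (Df n x)) has_vector_derivative complex_of_real (Df (Suc n) x)) (at x within {0..b})"
      by (rule has_vector_derivative_of_real)
  qed (use Df in auto)
  then show ?thesis by blast
qed


lemma mult_in_0b: "x \<in> {0..b} \<Longrightarrow> t \<in> {0..1} \<Longrightarrow> t * x \<in> {0..(b::real)}"
  by (auto simp: mult_le_cancel_right1 intro: order_trans[of _ x] mult_left_le_one_le)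

lemma chain_scale:
  assumes cw: "CW b \<phi> D" and x: "x \<in> {0..b}" and t: "t \<in> {0..1}"
  shows "((\<lambda>x. D n (t * x)) has_vector_derivative t *\<^sub>R D (Suc n) (t * x)) (at x within {0..b})"
proof -
  have f: "((\<lambda>x. t * x) has_vector_derivative t) (at x within {0..b})"
    by (auto intro!: derivative_eq_intros)
  have sub: "(\<lambda>x. t * x) ` {0..b} \<subseteq> {0..b}" using mult_in_0b t by auto
  have g: "(D n has_vector_derivative D (Suc n) (t * x)) (at (t * x) within (\<lambda>x. t * x) ` {0..b})"
    using has_vector_derivative_within_subset[OF CW_der[OF cw mult_in_0b[OF x t]] sub] .
  from vector_diff_chain_within[OF f g] show ?thesis by (simp add: o_def)
qed

lemma chain_scale_t:
  assumes cw: "CW b \<phi> D" and x: "x \<in> {0..b}" and t: "t \<in> {0..1}"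
  shows "((\<lambda>t. D n (t * x)) has_vector_derivative x *\<^sub>R D (Suc n) (t * x)) (at t within {0..1})"
proof -
  have f: "((\<lambda>t. t * x) has_vector_derivative x) (at t within {0..1})"
    by (auto intro!: derivative_eq_intros)
  have sub: "(\<lambda>t. t * x) ` {0..1} \<subseteq> {0..b}" using mult_in_0b x by auto
  have g: "(D n has_vector_derivative D (Suc n) (t * x)) (at (t * x) within (\<lambda>t. t * x) ` {0..1})"
    using has_vector_derivative_within_subset[OF CW_der[OF cw mult_in_0b[OF x t]] sub] .
  from vector_diff_chain_within[OF f g] show ?thesis by (simp add: o_def)
qed

lemma cont_scale:
  assumes cw: "CW b \<phi> D" and x: "x \<in> {0..b}"
  shows "continuous_on {0..1} (\<lambda>t. D n (t * x))"
proof -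
  have "continuous_on {0..1} (\<lambda>t. t * x)" by (intro continuous_intros)
  moreover have "(\<lambda>t. t * x) ` {0..1} \<subseteq> {0..b}" using mult_in_0b x by auto
  ultimately show ?thesis
    using continuous_on_compose2[OF CW_cont[OF cw, of n]] by blast
qed

lemma has_integral_pow01: "((\<lambda>t::real. t ^ n) has_integral (1 / real (Suc n))) {0..1}"
proof -
  have d: "((\<lambda>t. t ^ Suc n / real (Suc n)) has_vector_derivative t ^ n) (at t within {0..1})" for t :: real
  proof -
    have "((\<lambda>t. t ^ Suc n / real (Suc n)) has_real_derivative (real (Suc n) * t ^ (Suc n - Suc 0)) / real (Suc n)) (at t within {0..1})"
      by (intro DERIV_cdivide DERIV_pow)
    then show ?thesis by (simp add: has_real_derivative_iff_has_vector_derivative)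
  qed
  have "((\<lambda>t::real. t ^ n) has_integral ((\<lambda>t. t ^ Suc n / real (Suc n)) 1 - (\<lambda>t. t ^ Suc n / real (Suc n)) 0)) {0..1}"
    by (rule fundamental_theorem_of_calculus) (simp, rule d)
  then show ?thesis by simp
qed

lemma CW_div:
  assumes b: "b > 0" and cw: "CW b F D"
  shows "\<exists>G DG. CW b G DG \<and> (\<forall>x\<in>{0..b}. F x = F 0 + of_real x * G x) \<and>
                 (\<forall>n. DG n 0 = D (Suc n) 0 / of_nat (Suc n))"
proof -
  define DG where "DG n x = integral {0..1} (\<lambda>t. (t ^ n) *\<^sub>R D (Suc n) (t * x))" for n x
  have integ: "(\<lambda>t. (t ^ n) *\<^sub>R D m (t * x)) integrable_on {0..1}" if x: "x \<in> {0..b}" for n m x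
    by (rule integrable_continuous_interval)
       (intro continuous_intros cont_scale[OF cw x])
  have der: "(DG n has_vector_derivative DG (Suc n) x0) (at x0 within {0..b})" if x0: "x0 \<in> {0..b}" for n x0
  proof -
    have "((\<lambda>x. integral (cbox 0 1) (\<lambda>t. (t ^ n) *\<^sub>R D (Suc n) (t * x))) has_vector_derivative
        integral (cbox 0 1) (\<lambda>t. (t ^ Suc n) *\<^sub>R D (Suc (Suc n)) (t * x0))) (at x0 within {0..b})"
    proof (rule leibniz_rule_vector_derivative)
      fix x t :: real assume x: "x \<in> {0..b}" and t: "t \<in> cbox 0 1"
      then have t': "t \<in> {0..1}" by simp
      have "((\<lambda>x. (t ^ n) *\<^sub>R D (Suc n) (t * x)) has_vector_derivative
          (t ^ n) *\<^sub>R (t *\<^sub>R D (Suc (Suc n)) (t * x))) (at x within {0..b})"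
        by (rule bounded_linear.has_vector_derivative[OF bounded_linear_scaleR_right chain_scale[OF cw x t']])
      then show "((\<lambda>x. (t ^ n) *\<^sub>R D (Suc n) (t * x)) has_vector_derivative
          (t ^ Suc n) *\<^sub>R D (Suc (Suc n)) (t * x)) (at x within {0..b})"
        by (simp add: scaleR_scaleR mult.commute)
    next
      fix x :: real assume x: "x \<in> {0..b}"
      show "(\<lambda>t. (t ^ n) *\<^sub>R D (Suc n) (t * x)) integrable_on cbox 0 1"
        using integ[OF x] by simp
    next
      have "continuous_on ({0..b} \<times> {0..1}) (\<lambda>p. D (Suc (Suc n)) (snd p * fst p))"
      proof (rule continuous_on_compose2[OF CW_cont[OF cw, of "Suc (Suc n)"]])
        show "continuous_on ({0..b} \<times> {0..1}) (\<lambda>p. snd p * fst p)" by (intro continuous_intros)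
        show "(\<lambda>p. snd p * fst p) ` ({0..b} \<times> {0..1}) \<subseteq> {0..b}" using mult_in_0b by auto
      qed
      then show "continuous_on ({0..b} \<times> cbox 0 1) (\<lambda>(x, t). (t ^ Suc n) *\<^sub>R D (Suc (Suc n)) (t * x))"
        by (auto simp: split_beta intro!: continuous_intros)
    qed (use x0 in auto)
    then show ?thesis unfolding DG_def[abs_def] by simp
  qed
  define G where "G = DG 0"
  have cwG: "CW b G DG"
    by (rule CW_intro) (auto simp: G_def der)
  have eq: "F x = F 0 + of_real x * G x" if x: "x \<in> {0..b}" for x
  proof -
    have "((\<lambda>t. x *\<^sub>R D 1 (t * x)) has_integral (D 0 (1 * x) - D 0 (0 * x))) {0..1}"
      by (rule fundamental_theorem_of_calculus) (auto intro!: chain_scale_t[OF cw x])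
    moreover have "((\<lambda>t. x *\<^sub>R D 1 (t * x)) has_integral (x *\<^sub>R G x)) {0..1}"
      unfolding G_def DG_def using integ[OF x, of 0 1]
      by (intro has_integral_cmul) (simp add: integrable_integral)
    ultimately have "D 0 (1 * x) - D 0 (0 * x) = x *\<^sub>R G x" by (rule has_integral_unique)
    then have "D 0 x - D 0 0 = of_real x * G x" by (simp add: scaleR_conv_of_real)
    moreover have "D 0 x = F x" using CW_D0[OF cw x] .
    moreover have "D 0 0 = F 0" using CW_D0[OF cw, of 0] b by simp
    ultimately show ?thesis by (metis add.commute diff_add_cancel)
  qed
  have at0: "DG n 0 = D (Suc n) 0 / of_nat (Suc n)" for n
  proof -
    have "((\<lambda>t. (t ^ n) *\<^sub>R D (Suc n) 0) has_integral ((1 / real (Suc n)) *\<^sub>R D (Suc n) 0)) {0..1}"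
      by (rule has_integral_scaleR_left[OF has_integral_pow01])
    then have "DG n 0 = (1 / real (Suc n)) *\<^sub>R D (Suc n) 0" unfolding DG_def by (simp add: integral_unique)
    then show ?thesis by (simp add: scaleR_conv_of_real divide_inverse_commute)
  qed
  show ?thesis using cwG eq at0 by blast
qed

lemma CW_taylor:
  assumes b: "b > 0" and cw: "CW b s D"
  shows "\<exists>G DG. CW b G DG \<and> (\<forall>x\<in>{0..b}.
           s x - (\<Sum>j\<le>r. D j 0 / fact j * complex_of_real (x ^ j)) = complex_of_real (x ^ (r+1)) * G x)"
  using cw
proof (induction r arbitrary: s D)
  case 0
  obtain G DG where G: "CW b G DG" "\<forall>x\<in>{0..b}. s x = s 0 + of_real x * G x"
    using CW_div[OF b 0] by blast
  have "s x - D 0 0 = of_real x * G x" if "x \<in> {0..b}" for x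
  proof -
    have "D 0 0 = s 0" using CW_D0[OF 0, of 0] b by simp
    then show ?thesis using bspec[OF G(2) that] by simp
  qed
  then show ?case using G(1) by auto
next
  case (Suc r)
  obtain G1 DG1 where G1: "CW b G1 DG1" "\<forall>x\<in>{0..b}. s x = s 0 + of_real x * G1 x"
      "\<forall>n. DG1 n 0 = D (Suc n) 0 / of_nat (Suc n)"
    using CW_div[OF b Suc.prems] by blast
  obtain G DG where G: "CW b G DG" "\<forall>x\<in>{0..b}.
      G1 x - (\<Sum>j\<le>r. DG1 j 0 / fact j * complex_of_real (x ^ j)) = complex_of_real (x ^ (r+1)) * G x"
    using Suc.IH[OF G1(1)] by blast
  have "s x - (\<Sum>j\<le>Suc r. D j 0 / fact j * complex_of_real (x ^ j)) = complex_of_real (x ^ (Suc r + 1)) * G x"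
    if x: "x \<in> {0..b}" for x
  proof -
    have coef: "D (Suc j) 0 / fact (Suc j) * complex_of_real (x ^ Suc j) = of_real x * (DG1 j 0 / fact j * complex_of_real (x ^ j))" for j
    proof -
      have "D (Suc j) 0 / fact (Suc j) = DG1 j 0 / fact j"
      proof -
      have "D (Suc j) 0 / fact (Suc j) = D (Suc j) 0 / (of_nat (Suc j) * fact j)" by (simp only: fact_Suc)
      also have "\<dots> = D (Suc j) 0 / of_nat (Suc j) / fact j" by (simp only: divide_divide_eq_left)
      also have "\<dots> = DG1 j 0 / fact j" using G1(3) by (simp only:)
      finally show ?thesis .
    qed
      moreover have "complex_of_real (x ^ Suc j) = of_real x * of_real (x ^ j)" by simp
      ultimately show ?thesis by (simp only: mult.left_commute)
    qed
    have "(\<Sum>j\<le>Suc r. D j 0 / fact j * complex_of_real (x ^ j))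
        = D 0 0 + (\<Sum>j\<le>r. D (Suc j) 0 / fact (Suc j) * complex_of_real (x ^ Suc j))"
      by (subst sum.atMost_Suc_shift) simp
    also have "\<dots> = D 0 0 + of_real x * (\<Sum>j\<le>r. DG1 j 0 / fact j * complex_of_real (x ^ j))"
      unfolding coef sum_distrib_left ..
    finally have "(\<Sum>j\<le>Suc r. D j 0 / fact j * complex_of_real (x ^ j))
        = D 0 0 + of_real x * (\<Sum>j\<le>r. DG1 j 0 / fact j * complex_of_real (x ^ j))" .
    moreover have "s x = D 0 0 + of_real x * G1 x"
    proof -
      have "D 0 0 = s 0" using CW_D0[OF Suc.prems, of 0] b by simp
      then show ?thesis using bspec[OF G1(2) x] by simp
    qed
    ultimately have "s x - (\<Sum>j\<le>Suc r. D j 0 / fact j * complex_of_real (x ^ j))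
        = of_real x * (G1 x - (\<Sum>j\<le>r. DG1 j 0 / fact j * complex_of_real (x ^ j)))"
      by (simp only: right_diff_distrib add_diff_cancel_left)
    also have "\<dots> = of_real x * (complex_of_real (x ^ (r+1)) * G x)" using bspec[OF G(2) x] by simp
    finally show ?thesis by simp
  qed
  then show ?case using G(1) by blast
qed


definition psi :: "nat \<Rightarrow> complex \<Rightarrow> (real \<Rightarrow> complex) \<Rightarrow> (real \<Rightarrow> complex) \<Rightarrow> real \<Rightarrow> complex" where
  "psi r e G G1 x = 1 / of_nat (r+1) * (G x + of_real x * G1 x) - e * G x"

lemma CW_psi: "CW b G DG \<Longrightarrow> \<exists>D. CW b (psi r e G (DG 1)) D"
proof -
  assume cw: "CW b G DG"
  from CW_diff[OF CW_cmult[OF CW_add[OF cw CW_xmult[OF CW_shift[OF cw]]]] CW_cmult[OF cw]]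
  show ?thesis unfolding psi_def[abs_def] by blast
qed

lemma taylorT_eq:
  assumes b: "b > 0" and cw: "CW b s D"
  shows "taylorT r b s x 0 = (\<Sum>j\<le>r. D j 0 / fact j * complex_of_real (x ^ j))"
  unfolding taylorT_def using CW_dI[OF b cw, of 0] b by simp

lemma gpow_deriv:
  assumes x: "x > 0"
  shows "((\<lambda>x. gpow r x a) has_vector_derivative
      (of_real (real (r+1) * x ^ r) * (a * gpow r x (a - 1)))) (at x)"
proof -
  have f: "((\<lambda>x. complex_of_real (x ^ (r+1))) has_vector_derivative of_real (real (r+1) * x ^ r)) (at x)"
  proof -
    have "((\<lambda>x. x ^ (r+1)) has_real_derivative (real (r+1) * x ^ (r + 1 - Suc 0))) (at x)"
      by (rule DERIV_pow)
    then show ?thesis by (intro has_vector_derivative_of_real) simp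
  qed
  have "x ^ (r+1) > 0" using x by simp
  then have nn: "complex_of_real (x ^ (r+1)) \<notin> \<real>\<^sub>\<le>\<^sub>0" by (simp add: complex_nonpos_Reals_iff)
  from field_vector_diff_chain_at[OF f has_field_derivative_powr[OF nn, of a]]
  show ?thesis by (simp add: gpow_def o_def)
qed

lemma sigma_step:
  assumes b: "b > 0" and cw: "CW b (sigma_hat r \<nu> b \<phi> k) D"
  shows "\<exists>G DG. CW b G DG \<and>
     (\<forall>x\<in>{0..b}. sigma_hat r \<nu> b \<phi> k x - taylorT r b (sigma_hat r \<nu> b \<phi> k) x 0 = complex_of_real (x ^ (r+1)) * G x) \<and>
     (\<forall>x\<in>{0..b}. sigma_hat r \<nu> b \<phi> (Suc k) x = psi r (\<nu> + of_nat (Suc k)) G (DG 1) x)"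
proof -
  define s where "s = sigma_hat r \<nu> b \<phi> k"
  define e where "e = \<nu> + of_nat (Suc k)"
  obtain G DG where G: "CW b G DG" "\<forall>x\<in>{0..b}.
      s x - (\<Sum>j\<le>r. D j 0 / fact j * complex_of_real (x ^ j)) = complex_of_real (x ^ (r+1)) * G x"
    using CW_taylor[OF b cw[folded s_def]] by blast
  have tay: "s x - taylorT r b s x 0 = complex_of_real (x ^ (r+1)) * G x" if "x \<in> {0..b}" for x
    using G(2) that taylorT_eq[OF b cw[folded s_def]] by simp
  define h where "h x = (s x - taylorT r b s x 0) / (gpow r x e * complex_of_real (real (r + 1) * x ^ r))" for x
  define u where "u x = gpow r x e * dI b h x" for x
  have sig: "sigma_hat r \<nu> b \<phi> (Suc k) = (\<lambda>x. if x = 0 then Lim (at_right 0) u else u x)"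
    unfolding sigma_hat.simps Let_def u_def h_def s_def e_def by (rule refl)
  define P where "P = psi r e G (DG 1)"
  define N where "N = (of_nat (r+1) :: complex)"
  have N0: "N \<noteq> 0" unfolding N_def by (metis of_nat_eq_0_iff add_is_0 one_neq_zero)
  have uP: "u x = P x" if x: "x \<in> {0<..b}" for x
  proof -
    have x0: "x > 0" and xb: "x \<le> b" using x by auto
    define ht where "ht y = of_real y * G y / of_nat (r+1) * gpow r y (- e)" for y
    have Z0: "complex_of_real (y ^ (r+1)) \<noteq> 0" if "y > 0" for y using that by simp
    have gpow_inv: "gpow r y (- e) = inverse (gpow r y e)" for y
      by (simp add: gpow_def powr_minus)
    have hht: "h y = ht y" if y: "y \<in> {0..b}" "dist y x < x" for y
    proof -
      have y0: "y > 0" using y x0 by (auto simp: dist_real_def)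
      have "gpow r y e \<noteq> 0" using Z0[OF y0] by (simp add: gpow_def)
      moreover have "of_real y \<noteq> (0::complex)" using y0 by simp
      moreover have "(of_real y :: complex) ^ r \<noteq> 0" using y0 by simp
      moreover have "complex_of_real (real (r + 1) * y ^ r) = N * of_real y ^ r" by (simp add: N_def)
      moreover have "complex_of_real (y ^ (r+1)) = of_real y * of_real y ^ r" by simp
      ultimately show ?thesis
        unfolding h_def ht_def gpow_inv tay[OF y(1)] N_def[symmetric] using N0
        by (simp add: field_simps)
    qed
    have Dht: "(ht has_vector_derivative
        ((G x + of_real x * DG 1 x) / of_nat (r+1) * gpow r x (- e)
         + of_real x * G x / of_nat (r+1) * (of_real (real (r+1) * x ^ r) * (- e * gpow r x (- e - 1)))))
        (at x within {0..b})"
    proof -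
      have dG: "(G has_vector_derivative DG 1 x) (at x within {0..b})"
        using CW_der[OF G(1), of x 0] x CW_D0[OF G(1)] has_vector_derivative_transform_within
        by (metis (no_types, lifting) One_nat_def atLeastAtMost_iff greaterThanLessThan_iff
            greaterThanAtMost_iff less_eq_real_def zero_less_one)
      have dg: "((\<lambda>y. gpow r y (- e)) has_vector_derivative
          (of_real (real (r+1) * x ^ r) * (- e * gpow r x (- e - 1)))) (at x within {0..b})"
        using gpow_deriv[OF x0, of r "- e"] has_vector_derivative_at_within by blast
      show ?thesis unfolding ht_def[abs_def]
        by (rule derivative_eq_intros dG dg refl | simp)+
    qed
    have Dh: "(h has_vector_derivative
        ((G x + of_real x * DG 1 x) / of_nat (r+1) * gpow r x (- e)
         + of_real x * G x / of_nat (r+1) * (of_real (real (r+1) * x ^ r) * (- e * gpow r x (- e - 1)))))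
        (at x within {0..b})"
    proof (rule has_vector_derivative_transform_within[OF Dht x0])
      show "x \<in> {0..b}" using x by auto
      fix y assume "y \<in> {0..b}" "dist y x < x" then show "ht y = h y" using hht by simp
    qed
    have dIh: "dI b h x = (G x + of_real x * DG 1 x) / of_nat (r+1) * gpow r x (- e)
         + of_real x * G x / of_nat (r+1) * (of_real (real (r+1) * x ^ r) * (- e * gpow r x (- e - 1)))"
      unfolding dI_def using vector_derivative_within_closed_interval[OF b _ Dh] x by auto
    define Q where "Q = gpow r x e"
    define Z where "Z = complex_of_real (x ^ (r+1))"
    have Q0: "Q \<noteq> 0" using Z0[OF x0] by (simp add: Q_def gpow_def)
    have Zx: "Z = of_real x * of_real x ^ r" unfolding Z_def by simp
    have x0c: "(of_real x :: complex) \<noteq> 0" using x0 by simp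
    have g1: "gpow r x (- e) = inverse Q" unfolding Q_def gpow_inv ..
    have g2: "gpow r x (- e - 1) = inverse Q / Z"
    proof -
      have "gpow r x (- e - 1) = gpow r x (- e) / Z powr 1"
        unfolding gpow_def Z_def by (rule powr_diff)
      then show ?thesis using g1 by simp
    qed
    have "u x = Q * dI b h x" unfolding u_def Q_def ..
    also have "\<dots> = P x"
    proof -
      have "complex_of_real (real (r + 1) * x ^ r) = N * of_real x ^ r" by (simp add: N_def)
      then show ?thesis
        unfolding dIh g1 g2 P_def psi_def Zx N_def[symmetric] using Q0 x0c N0
        by (simp add: field_simps)
    qed
    finally show ?thesis .
  qed
  have P0: "Lim (at_right 0) u = P 0"
  proof -
    obtain DP where cwP: "CW b P DP" using CW_psi[OF G(1)] unfolding P_def by blast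
    have "continuous_on {0..b} P"
      by (rule continuous_on_eq[OF CW_cont[OF cwP, of 0]]) (simp add: CW_D0[OF cwP])
    moreover have "0 \<in> {0..b}" using b by simp
    ultimately have "(P \<longlongrightarrow> P 0) (at 0 within {0..b})"
      unfolding continuous_on_def by blast
    moreover have "eventually (\<lambda>x. x \<in> {0..b} \<longleftrightarrow> x \<in> {0<..}) (at (0::real))"
      unfolding eventually_at using b by (intro exI[of _ b]) (auto simp: dist_real_def)
    ultimately have lim: "(P \<longlongrightarrow> P 0) (at_right 0)"
      by (rule Lim_transform_within_set)
    have "eventually (\<lambda>x. x \<in> {0<..<b}) (at_right (0::real))"
      by (rule eventually_at_right_real[OF b])
    then have "eventually (\<lambda>x. u x = P x) (at_right (0::real))"
      by (rule eventually_mono) (auto intro: uP)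
    with lim have "(u \<longlongrightarrow> P 0) (at_right 0)"
      using tendsto_cong by blast
    then show ?thesis by (rule tendsto_Lim[rotated]) simp
  qed
  show ?thesis
  proof (intro exI conjI ballI)
    show "CW b G DG" by (rule G(1))
  next
    fix x assume x: "x \<in> {0..b}"
    show "sigma_hat r \<nu> b \<phi> k x - taylorT r b (sigma_hat r \<nu> b \<phi> k) x 0 = complex_of_real (x ^ (r+1)) * G x"
      using tay[OF x] unfolding s_def .
  next
    fix x assume x: "x \<in> {0..b}"
    show "sigma_hat r \<nu> b \<phi> (Suc k) x = psi r (\<nu> + of_nat (Suc k)) G (DG 1) x"
    proof (cases "x = 0")
      case True then show ?thesis using P0 unfolding sig P_def e_def by simp
    next
      case False then have "x \<in> {0<..b}" using x by auto
      then show ?thesis using False uP unfolding sig P_def e_def by simp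
    qed
  qed
qed

lemma sigma_CW:
  assumes b: "b > 0" and f: "Cinf_on_interval 0 b f"
  shows "\<exists>D. CW b (sigma_hat r \<nu> b (\<lambda>x. complex_of_real (f x)) k) D"
proof (induction k)
  case 0
  then show ?case using CW_of_real[OF f] by simp
next
  case (Suc k)
  then obtain D where "CW b (sigma_hat r \<nu> b (\<lambda>x. complex_of_real (f x)) k) D" by blast
  from sigma_step[OF b this] obtain G DG where
    G: "CW b G DG" "\<forall>x\<in>{0..b}. sigma_hat r \<nu> b (\<lambda>x. complex_of_real (f x)) (Suc k) x = psi r (\<nu> + of_nat (Suc k)) G (DG 1) x"
    by blast
  obtain DP where "CW b (psi r (\<nu> + of_nat (Suc k)) G (DG 1)) DP" using CW_psi[OF G(1)] by blast
  then have "CW b (sigma_hat r \<nu> b (\<lambda>x. complex_of_real (f x)) (Suc k)) DP"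
    by (rule CW_cong) (use G(2) in auto)
  then show ?case by blast
qed


lemma bessel_cont: "continuous_on {0<..} (bessel_J \<mu>)"
  by (rule continuous_at_imp_continuous_on)
     (auto intro: has_vector_derivative_continuous bessel_deriv)

lemma bessel_cont_comp:
  assumes w: "\<omega> > 0"
  shows "continuous_on {0<..b} (\<lambda>x. bessel_J \<mu> (\<omega> * x ^ (r+1)))"
proof (rule continuous_on_compose2[OF bessel_cont])
  show "continuous_on {0<..b} (\<lambda>x. \<omega> * x ^ (r+1))" by (intro continuous_intros)
  show "(\<lambda>x. \<omega> * x ^ (r+1)) ` {0<..b} \<subseteq> {0<..}" using w by auto
qed

lemma cont_bound:
  assumes "continuous_on {0..b} (\<phi> :: real \<Rightarrow> complex)"
  shows "\<exists>M\<ge>0. \<forall>x\<in>{0..b}. cmod (\<phi> x) \<le> M"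
proof -
  have "compact (\<phi> ` {0..b})" by (rule compact_continuous_image[OF assms]) simp
  then obtain M where "\<forall>y\<in>\<phi> ` {0..b}. cmod y \<le> M" using compact_imp_bounded bounded_iff by metis
  then show ?thesis by (intro exI[of _ "max M 0"]) auto
qed

lemma integ_J:
  assumes b: "b > 0" and w: "\<omega> > 0" and mu: "real (r+1) * Re \<mu> > -1"
    and phi: "continuous_on {0..b} \<phi>"
  shows "(\<lambda>x. \<phi> x * bessel_J \<mu> (\<omega> * x ^ (r+1))) integrable_on {0..b}"
proof -
  define a where "a = real (r+1) * Re \<mu>"
  obtain K where K: "K \<ge> 0" "\<And>t. 0 < t \<and> t \<le> \<omega> * b ^ (r+1) \<Longrightarrow> cmod (bessel_J \<mu> t) \<le> K * (t/2) powr Re \<mu>"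
    using bessel_bound0[of "\<omega> * b ^ (r+1)" \<mu>] b w by auto
  obtain M where M: "M \<ge> 0" "\<And>x. x \<in> {0..b} \<Longrightarrow> cmod (\<phi> x) \<le> M" using cont_bound[OF phi] by blast
  define g where "g x = M * K * (\<omega>/2) powr Re \<mu> * x powr a" for x
  have gint: "g integrable_on {0..b}"
  proof -
    have "((\<lambda>x. x powr a) has_integral (b powr (a + 1) / (a + 1))) {0..b}"
      using has_integral_powr_from_0[of a b] mu b by (auto simp: a_def)
    from has_integral_mult_right[OF this, of "M * K * (\<omega>/2) powr Re \<mu>"]
    show ?thesis unfolding g_def integrable_on_def by blast
  qed
  have gint': "g integrable_on {0<..b}"
    using gint by (rule integrable_spike_set) (auto simp: negligible_insert intro: negligible_subset[of "{0}"])
  have bound: "norm (\<phi> x * bessel_J \<mu> (\<omega> * x ^ (r+1))) \<le> g x" if x: "x \<in> {0<..b}" for x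
  proof -
    have x0: "x > 0" and xb: "x \<le> b" using x by auto
    have "x ^ (r+1) \<le> b ^ (r+1)" using x0 xb by (intro power_mono) auto
    then have t: "0 < \<omega> * x ^ (r+1) \<and> \<omega> * x ^ (r+1) \<le> \<omega> * b ^ (r+1)"
      using x0 w by (auto intro!: mult_left_mono simp del: power_Suc)
    have "(\<omega> * x ^ (r+1) / 2) powr Re \<mu> = (\<omega>/2) powr Re \<mu> * x powr a"
    proof -
      have "(\<omega> * x ^ (r+1) / 2) powr Re \<mu> = (\<omega>/2) powr Re \<mu> * (x ^ (r+1)) powr Re \<mu>"
        using x0 w by (simp add: powr_mult[symmetric] mult_ac)
      also have "(x ^ (r+1)) powr Re \<mu> = x powr a"
      proof -
        have "x ^ (r+1) = x powr (real (r+1))" using x0 by (rule powr_realpow[symmetric])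
        then have "(x ^ (r+1)) powr Re \<mu> = x powr (real (r+1) * Re \<mu>)" by (simp only: powr_powr)
        then show ?thesis by (simp only: a_def)
      qed
      finally show ?thesis .
    qed
    then have J: "cmod (bessel_J \<mu> (\<omega> * x ^ (r+1))) \<le> K * ((\<omega>/2) powr Re \<mu> * x powr a)"
      using K(2)[OF t] by simp
    have "norm (\<phi> x * bessel_J \<mu> (\<omega> * x ^ (r+1))) \<le> M * (K * ((\<omega>/2) powr Re \<mu> * x powr a))"
      unfolding norm_mult using M J x by (intro mult_mono) auto
    then show ?thesis unfolding g_def by (simp add: mult_ac)
  qed
  have meas: "(\<lambda>x. \<phi> x * bessel_J \<mu> (\<omega> * x ^ (r+1))) \<in> borel_measurable (lebesgue_on {0<..b})"
  proof (rule continuous_imp_measurable_on_sets_lebesgue)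
    show "continuous_on {0<..b} (\<lambda>x. \<phi> x * bessel_J \<mu> (\<omega> * x ^ (r+1)))"
    proof (intro continuous_intros)
      show "continuous_on {0<..b} \<phi>" by (rule continuous_on_subset[OF phi]) auto
      show "continuous_on {0<..b} (\<lambda>x. bessel_J \<mu> (\<omega> * x ^ (r+1)))" by (rule bessel_cont_comp[OF w])
    qed
  qed auto
  have "(\<lambda>x. \<phi> x * bessel_J \<mu> (\<omega> * x ^ (r+1))) integrable_on {0<..b}"
    by (rule measurable_bounded_by_integrable_imp_integrable[OF meas gint' bound]) auto
  then show ?thesis
    by (rule integrable_spike_set) (auto intro: negligible_subset[of "{0}"])
qed


lemma bessel_cont0:
  assumes mu: "Re \<mu> > 0"
  shows "continuous_on {0..} (bessel_J \<mu>)"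
  unfolding continuous_on_eq_continuous_within
proof
  fix t :: real assume t: "t \<in> {0..}"
  show "continuous (at t within {0..}) (bessel_J \<mu>)"
  proof (cases "t = 0")
    case False
    then have "t > 0" using t by auto
    then show ?thesis
      using has_vector_derivative_continuous[OF bessel_deriv] continuous_at_imp_continuous_at_within by blast
  next
    case True
    obtain K where K: "K \<ge> 0" "\<And>s. 0 < s \<and> s \<le> 1 \<Longrightarrow> cmod (bessel_J \<mu> s) \<le> K * (s/2) powr Re \<mu>"
      using bessel_bound0[of 1 \<mu>] by auto
    have lim0: "((\<lambda>s. (s/2) powr Re \<mu>) \<longlongrightarrow> 0) (at 0 within {0..})"
    proof (rule tendsto_zero_powrI)
      show "((\<lambda>s::real. s/2) \<longlongrightarrow> 0) (at 0 within {0..})" by (auto intro!: tendsto_eq_intros)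
      show "eventually (\<lambda>s::real. 0 \<le> s/2) (at 0 within {0..})"
        unfolding eventually_at by (intro exI[of _ 1]) auto
    qed (use mu in auto)
    have ev: "eventually (\<lambda>s. norm (bessel_J \<mu> s) \<le> norm ((s/2) powr Re \<mu>) * K) (at 0 within {0..})"
    proof -
      have "eventually (\<lambda>s. s \<in> {0..} \<and> s \<noteq> 0 \<and> dist s 0 < 1) (at (0::real) within {0..})"
        unfolding eventually_at by (intro exI[of _ 1]) auto
      then show ?thesis
      proof (rule eventually_mono)
        fix s :: real assume s: "s \<in> {0..} \<and> s \<noteq> 0 \<and> dist s 0 < 1"
        then have "0 < s \<and> s \<le> 1" by (auto simp: dist_real_def)
        then show "norm (bessel_J \<mu> s) \<le> norm ((s/2) powr Re \<mu>) * K"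
          using K(2) by (simp add: mult.commute)
      qed
    qed
    have "(bessel_J \<mu> \<longlongrightarrow> 0) (at 0 within {0..})"
      by (rule tendsto_0_le[OF lim0 ev])
    then show ?thesis using True by (simp add: continuous_within bessel_J_0)
  qed
qed

lemma bessel_comp_cont0:
  assumes mu: "Re \<mu> > 0" and w: "\<omega> > 0"
  shows "continuous_on {0..b} (\<lambda>x. bessel_J \<mu> (\<omega> * x ^ (r+1)))"
proof (rule continuous_on_compose2[OF bessel_cont0[OF mu]])
  show "continuous_on {0..b} (\<lambda>x. \<omega> * x ^ (r+1))" by (intro continuous_intros)
  show "(\<lambda>x. \<omega> * x ^ (r+1)) ` {0..b} \<subseteq> {0..}" using w by auto
qed

lemma CW_cont0: "CW b G DG \<Longrightarrow> continuous_on {0..b} G"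
  by (rule continuous_on_eq[OF CW_cont[of b G DG 0]]) (auto simp: CW_D0)

lemma CW_der_at:
  assumes cw: "CW b G DG" and x: "x \<in> {0<..<b}"
  shows "(G has_vector_derivative DG 1 x) (at x)"
proof -
  have xb: "x \<in> {0..b}" using x by auto
  have "(DG 0 has_vector_derivative DG 1 x) (at x within {0<..<b})"
  proof -
    have "{0<..<b} \<subseteq> {0..b}" by auto
    from has_vector_derivative_within_subset[OF CW_der[OF cw xb, of 0] this] show ?thesis by simp
  qed
  then have "(G has_vector_derivative DG 1 x) (at x within {0<..<b})"
    using has_vector_derivative_transform_within[of "DG 0" _ x "{0<..<b}" 1 G] x CW_D0[OF cw] by auto
  then show ?thesis using has_vector_derivative_within_open[of x "{0<..<b}"] x by auto
qed

lemma ibp: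
  assumes b: "b > 0" and w: "\<omega> > 0" and mu: "real (r+1) * Re \<mu> > -1"
    and cwG: "CW b G DG" and FG: "\<And>x. x \<in> {0..b} \<Longrightarrow> F x = of_real (x ^ (r+1)) * G x"
  shows "((\<lambda>x. F x * bessel_J \<mu> (\<omega> * x ^ (r+1))) has_integral
     ((of_real b * G b / of_nat (r+1) * bessel_J (\<mu>+1) (\<omega> * b ^ (r+1))
       - integral {0..b} (\<lambda>x. psi r (\<mu>+1) G (DG 1) x * bessel_J (\<mu>+1) (\<omega> * x ^ (r+1)))) / of_real \<omega>)) {0..b}"
proof -
  define N where "N = (of_nat (r+1) :: complex)"
  have N0: "N \<noteq> 0" unfolding N_def by (metis of_nat_eq_0_iff add_is_0 one_neq_zero)
  define \<psi> where "\<psi> = psi r (\<mu>+1) G (DG 1)"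
  define J0 where "J0 x = bessel_J \<mu> (\<omega> * x ^ (r+1))" for x
  define J1 where "J1 x = bessel_J (\<mu>+1) (\<omega> * x ^ (r+1))" for x
  define Pf where "Pf x = of_real x * G x / N * J1 x" for x
  have mu1: "Re (\<mu>+1) > 0"
  proof (rule ccontr)
    assume "\<not> Re (\<mu>+1) > 0"
    then have "Re \<mu> \<le> -1" by simp
    then have "real (r+1) * Re \<mu> \<le> 1 * Re \<mu>" by (intro mult_right_mono_neg) auto
    then show False using mu \<open>Re \<mu> \<le> -1\<close> by linarith
  qed
  have "0 < real (r+1) * Re (\<mu>+1)" using mu1 by (intro mult_pos_pos) auto
  then have mu1': "real (r+1) * Re (\<mu>+1) > -1" by linarith
  have cpsi: "continuous_on {0..b} \<psi>"
  proof -
    obtain DP where "CW b \<psi> DP" using CW_psi[OF cwG] unfolding \<psi>_def by blast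
    then show ?thesis by (rule CW_cont0)
  qed
  have intpsi: "((\<lambda>x. \<psi> x * J1 x) has_integral integral {0..b} (\<lambda>x. \<psi> x * J1 x)) {0..b}"
    unfolding J1_def by (rule integrable_integral[OF integ_J[OF b w mu1' cpsi]])
  have cPf: "continuous_on {0..b} Pf"
    unfolding Pf_def J1_def
    using CW_cont0[OF cwG] bessel_comp_cont0[OF mu1 w]
    by (intro continuous_intros) (auto simp: N0)
  have dPf: "(Pf has_vector_derivative (of_real \<omega> * (F x * J0 x) + \<psi> x * J1 x)) (at x)"
    if x: "x \<in> {0<..<b}" for x
  proof -
    have x0: "x > 0" using x by auto
    define t where "t = \<omega> * x ^ (r+1)"
    have t0: "t > 0" using x0 w by (simp add: t_def)
    have dt: "((\<lambda>x. \<omega> * x ^ (r+1)) has_vector_derivative (\<omega> * (real (r+1) * x ^ r))) (at x)"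
    proof -
      have "((\<lambda>x. \<omega> * x ^ (r+1)) has_real_derivative (\<omega> * (real (r+1) * x ^ (r + 1 - Suc 0)))) (at x)"
        by (intro DERIV_cmult DERIV_pow)
      then show ?thesis by (simp add: has_real_derivative_iff_has_vector_derivative)
    qed
    have dJ1: "(J1 has_vector_derivative (\<omega> * (real (r+1) * x ^ r)) *\<^sub>R
        (bessel_J \<mu> t - (\<mu>+1) / of_real t * bessel_J (\<mu>+1) t)) (at x)"
      using vector_diff_chain_at[OF dt bessel_deriv1[OF t0[unfolded t_def]]]
      unfolding J1_def[abs_def] t_def by (simp add: o_def)
    have dG: "(G has_vector_derivative DG 1 x) (at x)" by (rule CW_der_at[OF cwG x])
    have D: "(Pf has_vector_derivative
        (of_real x * DG 1 x + 1 * G x) / N * J1 x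
         + of_real x * G x / N * ((\<omega> * (real (r+1) * x ^ r)) *\<^sub>R
             (bessel_J \<mu> t - (\<mu>+1) / of_real t * bessel_J (\<mu>+1) t))) (at x)"
      unfolding Pf_def[abs_def]
      by (rule derivative_eq_intros dG dJ1 refl | simp)+
    have xb: "x \<in> {0..b}" using x by auto
    have "(of_real x * DG 1 x + 1 * G x) / N * J1 x
         + of_real x * G x / N * ((\<omega> * (real (r+1) * x ^ r)) *\<^sub>R
             (bessel_J \<mu> t - (\<mu>+1) / of_real t * bessel_J (\<mu>+1) t))
        = of_real \<omega> * (F x * J0 x) + \<psi> x * J1 x"
    proof -
      have e1: "(\<omega> * (real (r+1) * x ^ r)) *\<^sub>R z = of_real \<omega> * N * of_real x ^ r * z" for z :: complex
        by (simp add: scaleR_conv_of_real N_def)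
      have e2: "complex_of_real t = of_real \<omega> * of_real x * of_real x ^ r" by (simp add: t_def)
      have e3: "bessel_J \<mu> t = J0 x" "bessel_J (\<mu>+1) t = J1 x" by (simp_all add: J0_def J1_def t_def)
      have nz: "(of_real \<omega> :: complex) \<noteq> 0" "(of_real x :: complex) \<noteq> 0" "(of_real x :: complex) ^ r \<noteq> 0"
        using w x0 by auto
      show ?thesis
        unfolding e1 e2 e3 FG[OF xb] \<psi>_def psi_def N_def[symmetric] using N0 nz
        by (simp add: field_simps)
    qed
    then show ?thesis using D by simp
  qed
  have ftc: "((\<lambda>x. of_real \<omega> * (F x * J0 x) + \<psi> x * J1 x) has_integral (Pf b - Pf 0)) {0..b}"
    by (rule fundamental_theorem_of_calculus_interior[OF _ cPf dPf]) (use b in auto)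
  have "((\<lambda>x. (of_real \<omega> * (F x * J0 x) + \<psi> x * J1 x) - \<psi> x * J1 x) has_integral
      (Pf b - Pf 0 - integral {0..b} (\<lambda>x. \<psi> x * J1 x))) {0..b}"
    by (rule has_integral_diff[OF ftc intpsi])
  then have "((\<lambda>x. of_real \<omega> * (F x * J0 x)) has_integral
      (Pf b - integral {0..b} (\<lambda>x. \<psi> x * J1 x))) {0..b}"
    by (simp add: Pf_def)
  from has_integral_mult_right[OF this, of "inverse (of_real \<omega>)"]
  have "((\<lambda>x. F x * J0 x) has_integral
      ((Pf b - integral {0..b} (\<lambda>x. \<psi> x * J1 x)) / of_real \<omega>)) {0..b}"
    using w by (simp add: field_simps)
  then show ?thesis unfolding Pf_def J0_def J1_def \<psi>_def N_def .
qed


lemma telescope: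
  fixes I A R Bt :: "nat \<Rightarrow> complex" and \<omega> :: real
  assumes IAR: "\<And>k. I k = A k + R k"
    and RB: "\<And>k. of_real \<omega> * R k = Bt (Suc k) - I (Suc k)"
    and w: "\<omega> \<noteq> 0"
  shows "I 0 - (\<Sum>k\<le>n. 1 / (- complex_of_real \<omega>) ^ k * (A k - (if k = 0 then 0 else Bt k)))
         = R n / (- complex_of_real \<omega>) ^ n"
proof (induction n)
  case 0 then show ?case using IAR[of 0] by simp
next
  case (Suc n)
  have w': "complex_of_real \<omega> \<noteq> 0" using w by simp
  have Rn: "R n = (Bt (Suc n) - A (Suc n) - R (Suc n)) / of_real \<omega>"
    using RB[of n] IAR[of "Suc n"] w' by (simp add: field_simps)
  have "I 0 - (\<Sum>k\<le>Suc n. 1 / (- complex_of_real \<omega>) ^ k * (A k - (if k = 0 then 0 else Bt k)))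
      = R n / (- complex_of_real \<omega>) ^ n - 1 / (- complex_of_real \<omega>) ^ Suc n * (A (Suc n) - Bt (Suc n))"
    using Suc.IH by simp
  also have "\<dots> = R (Suc n) / (- complex_of_real \<omega>) ^ Suc n"
    unfolding Rn using w' by (simp add: field_simps)
  finally show ?case .
qed


lemma mu_cond:
  assumes "Re \<nu> > - 1 / real (r + 1)"
  shows "real (r+1) * Re (\<nu> + of_nat k) > -1"
proof -
  have "real (r+1) * Re \<nu> > real (r+1) * (- 1 / real (r + 1))"
    using assms by (intro mult_strict_left_mono) auto
  then have "real (r+1) * Re \<nu> > -1" by simp
  moreover have "real (r+1) * Re (\<nu> + of_nat k) \<ge> real (r+1) * Re \<nu>"
    by (intro mult_left_mono) auto
  ultimately show ?thesis by linarith
qed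

lemma perk:
  fixes f :: "real \<Rightarrow> real"
  assumes b: "b > 0" and nu: "Re \<nu> > - 1 / real (r + 1)" and f: "Cinf_on_interval 0 b f"
    and w: "\<omega> > 0"
  defines "\<sigma> \<equiv> sigma_hat r \<nu> b (\<lambda>x. complex_of_real (f x))"
  shows "integral {0..b} (\<lambda>x. \<sigma> k x * bessel_J (\<nu> + of_nat k) (\<omega> * x ^ (r + 1)))
       = (\<Sum>j\<le>r. (dI b ^^ j) (\<sigma> k) 0 / fact j * momentM r b j (\<nu> + of_nat k) \<omega>)
         + integral {0..b} (\<lambda>x. (\<sigma> k x - taylorT r b (\<sigma> k) x 0) * bessel_J (\<nu> + of_nat k) (\<omega> * x ^ (r + 1)))"
    and "of_real \<omega> * integral {0..b} (\<lambda>x. (\<sigma> k x - taylorT r b (\<sigma> k) x 0) * bessel_J (\<nu> + of_nat k) (\<omega> * x ^ (r + 1)))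
       = (\<sigma> k b - taylorT r b (\<sigma> k) b 0) * bessel_J (\<nu> + of_nat (Suc k)) (\<omega> * b ^ (r + 1)) / complex_of_real (real (r + 1) * b ^ r)
         - integral {0..b} (\<lambda>x. \<sigma> (Suc k) x * bessel_J (\<nu> + of_nat (Suc k)) (\<omega> * x ^ (r + 1)))"
proof -
  obtain D where cw: "CW b (\<sigma> k) D" using sigma_CW[OF b f] unfolding \<sigma>_def by blast
  obtain G DG where G: "CW b G DG"
    "\<forall>x\<in>{0..b}. \<sigma> k x - taylorT r b (\<sigma> k) x 0 = complex_of_real (x ^ (r+1)) * G x"
    "\<forall>x\<in>{0..b}. \<sigma> (Suc k) x = psi r (\<nu> + of_nat (Suc k)) G (DG 1) x"
    using sigma_step[OF b cw[unfolded \<sigma>_def]] unfolding \<sigma>_def by blast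
  define \<mu> where "\<mu> = \<nu> + of_nat k"
  have mu: "real (r+1) * Re \<mu> > -1" unfolding \<mu>_def by (rule mu_cond[OF nu])
  have mu1: "\<nu> + of_nat (Suc k) = \<mu> + 1" by (simp add: \<mu>_def)
  define J where "J x = bessel_J \<mu> (\<omega> * x ^ (r + 1))" for x
  define T where "T x = taylorT r b (\<sigma> k) x 0" for x
  have ib: "((\<lambda>x. (\<sigma> k x - T x) * J x) has_integral
     ((of_real b * G b / of_nat (r+1) * bessel_J (\<mu>+1) (\<omega> * b ^ (r+1))
       - integral {0..b} (\<lambda>x. psi r (\<mu>+1) G (DG 1) x * bessel_J (\<mu>+1) (\<omega> * x ^ (r+1)))) / of_real \<omega>)) {0..b}"
    unfolding J_def T_def by (rule ibp[OF b w mu G(1)]) (use G(2) in auto)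
  have Isuc: "integral {0..b} (\<lambda>x. psi r (\<mu>+1) G (DG 1) x * bessel_J (\<mu>+1) (\<omega> * x ^ (r+1)))
      = integral {0..b} (\<lambda>x. \<sigma> (Suc k) x * bessel_J (\<nu> + of_nat (Suc k)) (\<omega> * x ^ (r + 1)))"
    unfolding mu1[symmetric] by (rule integral_cong) (use G(3) in auto)
  have Bt: "(\<sigma> k b - T b) * bessel_J (\<nu> + of_nat (Suc k)) (\<omega> * b ^ (r + 1)) / complex_of_real (real (r + 1) * b ^ r)
      = of_real b * G b / of_nat (r+1) * bessel_J (\<mu>+1) (\<omega> * b ^ (r+1))"
  proof -
    define N where "N = (of_nat (r+1) :: complex)"
    have N0: "N \<noteq> 0" unfolding N_def by (metis of_nat_eq_0_iff add_is_0 one_neq_zero)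
    have "\<sigma> k b - T b = complex_of_real (b ^ (r+1)) * G b" using G(2) b unfolding T_def by auto
    also have "\<dots> = of_real b * of_real b ^ r * G b" by simp
    finally have e1: "\<sigma> k b - T b = of_real b * of_real b ^ r * G b" .
    have e2: "complex_of_real (real (r + 1) * b ^ r) = N * of_real b ^ r" by (simp add: N_def)
    have bz: "(of_real b :: complex) ^ r \<noteq> 0" using b by auto
    show ?thesis unfolding mu1 e1 e2 N_def[symmetric] using N0 bz by (simp add: field_simps)
  qed
  have RV: "integral {0..b} (\<lambda>x. (\<sigma> k x - T x) * J x)
      = (of_real b * G b / of_nat (r+1) * bessel_J (\<mu>+1) (\<omega> * b ^ (r+1))
       - integral {0..b} (\<lambda>x. psi r (\<mu>+1) G (DG 1) x * bessel_J (\<mu>+1) (\<omega> * x ^ (r+1)))) / of_real \<omega>"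
    using ib by (rule integral_unique)
  show "of_real \<omega> * integral {0..b} (\<lambda>x. (\<sigma> k x - taylorT r b (\<sigma> k) x 0) * bessel_J (\<nu> + of_nat k) (\<omega> * x ^ (r + 1)))
       = (\<sigma> k b - taylorT r b (\<sigma> k) b 0) * bessel_J (\<nu> + of_nat (Suc k)) (\<omega> * b ^ (r + 1)) / complex_of_real (real (r + 1) * b ^ r)
         - integral {0..b} (\<lambda>x. \<sigma> (Suc k) x * bessel_J (\<nu> + of_nat (Suc k)) (\<omega> * x ^ (r + 1)))"
    using RV[unfolded J_def T_def \<mu>_def] Bt[unfolded T_def] Isuc[unfolded \<mu>_def] w
    by (simp add: \<mu>_def)
  have Tx: "T x = (\<Sum>j\<le>r. D j 0 / fact j * complex_of_real (x ^ j))" for x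
    unfolding T_def by (rule taylorT_eq[OF b cw])
  have dI0: "(dI b ^^ j) (\<sigma> k) 0 = D j 0" for j using CW_dI[OF b cw, of 0] b by simp
  have mom: "((\<lambda>x. complex_of_real (x ^ j) * J x) has_integral momentM r b j \<mu> \<omega>) {0..b}" for j
    unfolding momentM_def J_def
    by (rule integrable_integral[OF integ_J[OF b w mu]]) (intro continuous_intros)
  have sumI: "((\<lambda>x. \<Sum>j\<le>r. D j 0 / fact j * (complex_of_real (x ^ j) * J x)) has_integral
      (\<Sum>j\<le>r. D j 0 / fact j * momentM r b j \<mu> \<omega>)) {0..b}"
    by (rule has_integral_sum) (simp, rule has_integral_mult_right[OF mom])
  have "((\<lambda>x. (\<sigma> k x - T x) * J x + (\<Sum>j\<le>r. D j 0 / fact j * (complex_of_real (x ^ j) * J x))) has_integral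
      (integral {0..b} (\<lambda>x. (\<sigma> k x - T x) * J x) + (\<Sum>j\<le>r. D j 0 / fact j * momentM r b j \<mu> \<omega>))) {0..b}"
    by (rule has_integral_add[OF integrable_integral[OF has_integral_integrable[OF ib]] sumI])
  moreover have "(\<lambda>x. (\<sigma> k x - T x) * J x + (\<Sum>j\<le>r. D j 0 / fact j * (complex_of_real (x ^ j) * J x)))
      = (\<lambda>x. \<sigma> k x * J x)"
  proof
    fix x
    have "(\<Sum>j\<le>r. D j 0 / fact j * (complex_of_real (x ^ j) * J x)) = T x * J x"
      unfolding Tx sum_distrib_right by (simp only: mult.assoc)
    then show "(\<sigma> k x - T x) * J x + (\<Sum>j\<le>r. D j 0 / fact j * (complex_of_real (x ^ j) * J x)) = \<sigma> k x * J x"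
      by (simp add: left_diff_distrib)
  qed
  ultimately have "((\<lambda>x. \<sigma> k x * J x) has_integral
      (integral {0..b} (\<lambda>x. (\<sigma> k x - T x) * J x) + (\<Sum>j\<le>r. D j 0 / fact j * momentM r b j \<mu> \<omega>))) {0..b}"
    by simp
  then have "integral {0..b} (\<lambda>x. \<sigma> k x * J x)
      = (\<Sum>j\<le>r. D j 0 / fact j * momentM r b j \<mu> \<omega>) + integral {0..b} (\<lambda>x. (\<sigma> k x - T x) * J x)"
    by (simp add: integral_unique add.commute)
  then show "integral {0..b} (\<lambda>x. \<sigma> k x * bessel_J (\<nu> + of_nat k) (\<omega> * x ^ (r + 1)))
       = (\<Sum>j\<le>r. (dI b ^^ j) (\<sigma> k) 0 / fact j * momentM r b j (\<nu> + of_nat k) \<omega>)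
         + integral {0..b} (\<lambda>x. (\<sigma> k x - taylorT r b (\<sigma> k) x 0) * bessel_J (\<nu> + of_nat k) (\<omega> * x ^ (r + 1)))"
    unfolding dI0 J_def T_def \<mu>_def .
qed


theorem corollary3p3:
  fixes r :: nat and \<nu> :: complex and b :: real and f :: "real \<Rightarrow> real"
  assumes "r \<ge> 1"
    and "Re \<nu> > - 1 / real (r + 1)"
    and "b > 0"
    and "Cinf_on_interval 0 b f"
  shows "\<forall>N::nat.
    (\<lambda>\<omega>. hankelH r b \<nu> (\<lambda>x. complex_of_real (f x)) \<omega>
       - (\<Sum>k\<le>N. (1 / (- complex_of_real \<omega>) ^ k) *
            ((\<Sum>j\<le>r. (dI b ^^ j) (sigma_hat r \<nu> b (\<lambda>x. complex_of_real (f x)) k) 0 / fact j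
                        * momentM r b j (\<nu> + of_nat k) \<omega>)
             - (if k = 0 then 0 else
                  (sigma_hat r \<nu> b (\<lambda>x. complex_of_real (f x)) (k - 1) b
                     - taylorT r b (sigma_hat r \<nu> b (\<lambda>x. complex_of_real (f x)) (k - 1)) b 0)
                  * bessel_J (\<nu> + of_nat k) (\<omega> * b ^ (r + 1))
                  / complex_of_real (real (r + 1) * b ^ r)))))
    \<in> O[at_top](\<lambda>\<omega>. complex_of_real (1 / \<omega> ^ Suc N))"
proof
  fix N :: nat
  note b = assms(3) and nu = assms(2) and f = assms(4)
  define \<sigma> where "\<sigma> = sigma_hat r \<nu> b (\<lambda>x. complex_of_real (f x))"
  define I where "I \<omega> k = integral {0..b} (\<lambda>x. \<sigma> k x * bessel_J (\<nu> + of_nat k) (\<omega> * x ^ (r + 1)))" for \<omega> k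
  define A where "A \<omega> k = (\<Sum>j\<le>r. (dI b ^^ j) (\<sigma> k) 0 / fact j * momentM r b j (\<nu> + of_nat k) \<omega>)" for \<omega> k
  define R where "R \<omega> k = integral {0..b} (\<lambda>x. (\<sigma> k x - taylorT r b (\<sigma> k) x 0) * bessel_J (\<nu> + of_nat k) (\<omega> * x ^ (r + 1)))" for \<omega> k
  define Bt where "Bt \<omega> k = (\<sigma> (k - 1) b - taylorT r b (\<sigma> (k - 1)) b 0) * bessel_J (\<nu> + of_nat k) (\<omega> * b ^ (r + 1))
                  / complex_of_real (real (r + 1) * b ^ r)" for \<omega> k
  define E where "E \<omega> = hankelH r b \<nu> (\<lambda>x. complex_of_real (f x)) \<omega>
       - (\<Sum>k\<le>N. (1 / (- complex_of_real \<omega>) ^ k) * (A \<omega> k - (if k = 0 then 0 else Bt \<omega> k)))" for \<omega>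
  have tel: "E \<omega> = R \<omega> N / (- complex_of_real \<omega>) ^ N" if w: "\<omega> > 0" for \<omega>
  proof -
    have "hankelH r b \<nu> (\<lambda>x. complex_of_real (f x)) \<omega> = I \<omega> 0"
      by (simp add: hankelH_def I_def \<sigma>_def)
    moreover have "I \<omega> 0 - (\<Sum>k\<le>N. 1 / (- complex_of_real \<omega>) ^ k * (A \<omega> k - (if k = 0 then 0 else Bt \<omega> k)))
         = R \<omega> N / (- complex_of_real \<omega>) ^ N"
    proof (rule telescope)
      fix k
      show "I \<omega> k = A \<omega> k + R \<omega> k"
        unfolding I_def A_def R_def \<sigma>_def by (rule perk(1)[OF b nu f w])
      show "of_real \<omega> * R \<omega> k = Bt \<omega> (Suc k) - I \<omega> (Suc k)"
        unfolding I_def Bt_def R_def \<sigma>_def using perk(2)[OF b nu f w] by simp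
    qed (use w in simp)
    ultimately show ?thesis unfolding E_def by simp
  qed
  obtain C where C: "C \<ge> 0" "\<And>t. t \<ge> 0 \<Longrightarrow> cmod (bessel_J (\<nu> + of_nat (Suc N)) t) \<le> C"
  proof -
    have "Re (\<nu> + of_nat (Suc N)) \<ge> 0"
    proof -
      have "1 / real (r + 1) \<le> 1" by simp
      moreover have "Re (\<nu> + of_nat (Suc N)) = Re \<nu> + 1 + real N" by simp
      ultimately show ?thesis using nu by (smt (verit) of_nat_0_le_iff minus_divide_left)
    qed
    from bessel_bounded[OF this] show ?thesis using that by blast
  qed
  obtain DS where cwS: "CW b (\<sigma> (Suc N)) DS" using sigma_CW[OF b f] unfolding \<sigma>_def by blast
  obtain MS where MS: "MS \<ge> 0" "\<And>x. x \<in> {0..b} \<Longrightarrow> cmod (\<sigma> (Suc N) x) \<le> MS"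
    using cont_bound[OF CW_cont0[OF cwS]] by blast
  define cB where "cB = (\<sigma> N b - taylorT r b (\<sigma> N) b 0) / complex_of_real (real (r + 1) * b ^ r)"
  define K where "K = cmod cB * C + MS * C * b"
  have Rbound: "cmod (R \<omega> N) \<le> K / \<omega>" if w: "\<omega> > 0" for \<omega>
  proof -
    have eq: "of_real \<omega> * R \<omega> N = Bt \<omega> (Suc N) - I \<omega> (Suc N)"
      unfolding I_def Bt_def R_def \<sigma>_def using perk(2)[OF b nu f w] by simp
    have "cmod (Bt \<omega> (Suc N)) \<le> cmod cB * C"
    proof -
      have "Bt \<omega> (Suc N) = cB * bessel_J (\<nu> + of_nat (Suc N)) (\<omega> * b ^ (r + 1))"
        unfolding Bt_def cB_def by simp
      moreover have "cmod (bessel_J (\<nu> + of_nat (Suc N)) (\<omega> * b ^ (r + 1))) \<le> C"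
        using C(2) w b by simp
      ultimately show ?thesis by (simp add: norm_mult mult_left_mono)
    qed
    moreover have "cmod (I \<omega> (Suc N)) \<le> MS * C * b"
    proof -
      have "(\<lambda>x. \<sigma> (Suc N) x * bessel_J (\<nu> + of_nat (Suc N)) (\<omega> * x ^ (r + 1))) integrable_on {0..b}"
        by (rule integ_J[OF b w mu_cond[OF nu] CW_cont0[OF cwS]])
      then have hi: "((\<lambda>x. \<sigma> (Suc N) x * bessel_J (\<nu> + of_nat (Suc N)) (\<omega> * x ^ (r + 1))) has_integral I \<omega> (Suc N)) (cbox 0 b)"
        unfolding I_def by (simp add: integrable_integral)
      have nn: "0 \<le> MS * C" using MS C by simp
      have bnd: "cmod (\<sigma> (Suc N) x * bessel_J (\<nu> + of_nat (Suc N)) (\<omega> * x ^ (r + 1))) \<le> MS * C"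
        if "x \<in> cbox 0 b" for x
      proof -
        have x: "x \<in> {0..b}" using that by simp
        have "cmod (bessel_J (\<nu> + of_nat (Suc N)) (\<omega> * x ^ (r + 1))) \<le> C" using C(2) w x by simp
        then show ?thesis unfolding norm_mult using MS(2)[OF x] MS(1) by (intro mult_mono) auto
      qed
      from has_integral_bound[OF nn hi bnd] show ?thesis using b by simp
    qed
    ultimately have "cmod (of_real \<omega> * R \<omega> N) \<le> K"
      unfolding eq K_def using norm_triangle_ineq4 by (smt (verit))
    then have "\<omega> * cmod (R \<omega> N) \<le> K" using w by (simp add: norm_mult)
    then show ?thesis using w by (simp add: field_simps)
  qed
  have "E \<in> O[at_top](\<lambda>\<omega>. complex_of_real (1 / \<omega> ^ Suc N))"
  proof (rule bigoI[where c=K])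
    show "eventually (\<lambda>\<omega>. norm (E \<omega>) \<le> K * norm (complex_of_real (1 / \<omega> ^ Suc N))) at_top"
      using eventually_gt_at_top[of "0::real"]
    proof (rule eventually_mono)
      fix \<omega> :: real assume w: "\<omega> > 0"
      have "norm (E \<omega>) = cmod (R \<omega> N) / \<omega> ^ N"
        unfolding tel[OF w] using w by (simp add: norm_divide norm_power)
      also have "\<dots> \<le> (K / \<omega>) / \<omega> ^ N"
        using Rbound[OF w] w by (intro divide_right_mono) auto
      also have "\<dots> = K * (1 / \<omega> ^ Suc N)"
        using w by (simp add: field_simps)
      also have "1 / \<omega> ^ Suc N = norm (complex_of_real (1 / \<omega> ^ Suc N))"
        using w by (simp only: norm_of_real) simp
      finally show "norm (E \<omega>) \<le> K * norm (complex_of_real (1 / \<omega> ^ Suc N))" .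
    qed
  qed
  then show "(\<lambda>\<omega>. hankelH r b \<nu> (\<lambda>x. complex_of_real (f x)) \<omega>
       - (\<Sum>k\<le>N. (1 / (- complex_of_real \<omega>) ^ k) *
            ((\<Sum>j\<le>r. (dI b ^^ j) (sigma_hat r \<nu> b (\<lambda>x. complex_of_real (f x)) k) 0 / fact j
                        * momentM r b j (\<nu> + of_nat k) \<omega>)
             - (if k = 0 then 0 else
                  (sigma_hat r \<nu> b (\<lambda>x. complex_of_real (f x)) (k - 1) b
                     - taylorT r b (sigma_hat r \<nu> b (\<lambda>x. complex_of_real (f x)) (k - 1)) b 0)
                  * bessel_J (\<nu> + of_nat k) (\<omega> * b ^ (r + 1))
                  / complex_of_real (real (r + 1) * b ^ r)))))
    \<in> O[at_top](\<lambda>\<omega>. complex_of_real (1 / \<omega> ^ Suc N))"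
    unfolding E_def A_def Bt_def \<sigma>_def .
qed


end
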